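(* There is a Radon probability measure $\nu$ on $\beta\omega$ such that: (i) $\nu$ is of countable type, i.e. $L^1(\nu)$ is separable; (ii) $\nu(\beta\omega\setminus\omega)=1$; (iii) $\nu(F)=0$ for every closed separable set $F\subseteq\beta\omega\setminus\omega$.
   Context: $\omega=\{0,1,2,\dots\}$ with the discrete topology and $\beta\omega$ is its Čech–Stone compactification. *)

theory Defs
  imports "HOL-Analysis.Analysis" "HOL-Probability.Probability"
begin

definition ultrafilter_nat :: "nat set set \<Rightarrow> bool" where
  "ultrafilter_nat U \<longleftrightarrow>
     UNIV \<in> U \<and> {} \<notin> U \<and>
     (\<forall>A B. A \<in> U \<and> A \<subseteq> B \<longrightarrow> B \<in> U) \<and>
     (\<forall>A B. A \<in> U \<and> B \<in> U \<longrightarrow> A \<inter> B \<in> U) \<and>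
     (\<forall>A. A \<in> U \<or> - A \<in> U)"

text \<open>The Cech-Stone compactification beta omega, realised as the Stone space
  of all ultrafilters on omega, with basic clopen sets {U. A in U}.\<close>
definition beta_omega :: "nat set set set" where
  "beta_omega = {U. ultrafilter_nat U}"

definition beta_omega_top :: "nat set set topology" where
  "beta_omega_top = topology_generated_by {{U \<in> beta_omega. A \<in> U} | A. True}"

definition principal_uf :: "nat \<Rightarrow> nat set set" where
  "principal_uf n = {A. n \<in> A}"

definition omega_in_beta :: "nat set set set" where
  "omega_in_beta = range principal_uf"

definition borel_sets_of :: "'a topology \<Rightarrow> 'a set set" where
  "borel_sets_of X = sigma_sets (topspace X) {U. openin X U}"

definition radon_probability :: "'a topology \<Rightarrow> 'a measure \<Rightarrow> bool" where
  "radon_probability X M \<longleftrightarrow>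
     prob_space M \<and> space M = topspace X \<and> sets M = borel_sets_of X \<and>
     (\<forall>B \<in> sets M. measure M B = (SUP K \<in> {K. compactin X K \<and> K \<subseteq> B}. measure M K))"

definition countable_type :: "'a measure \<Rightarrow> bool" where
  "countable_type M \<longleftrightarrow>
     (\<exists>D :: ('a \<Rightarrow> real) set. countable D \<and> (\<forall>g \<in> D. integrable M g) \<and>
        (\<forall>f. integrable M f \<longrightarrow>
           (\<forall>e>0. \<exists>g \<in> D. (\<integral>x. \<bar>f x - g x\<bar> \<partial>M) < e)))"

end

theory Submission
  imports Defs
begin


section \<open>Ultrafilters and the topology of beta omega\<close>

lemma uf_UNIV: "ultrafilter_nat U \<Longrightarrow> UNIV \<in> U"
  by (simp add: ultrafilter_nat_def)

lemma uf_empty: "ultrafilter_nat U \<Longrightarrow> {} \<notin> U"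
  by (simp add: ultrafilter_nat_def)

lemma uf_mono: "ultrafilter_nat U \<Longrightarrow> A \<in> U \<Longrightarrow> A \<subseteq> B \<Longrightarrow> B \<in> U"
  unfolding ultrafilter_nat_def by blast

lemma uf_Int: "ultrafilter_nat U \<Longrightarrow> A \<inter> B \<in> U \<longleftrightarrow> A \<in> U \<and> B \<in> U"
  unfolding ultrafilter_nat_def by (meson Int_lower1 Int_lower2)

lemma uf_Compl: "ultrafilter_nat U \<Longrightarrow> - A \<in> U \<longleftrightarrow> A \<notin> U"
proof -
  assume u: "ultrafilter_nat U"
  have "\<not> (A \<in> U \<and> - A \<in> U)"
  proof
    assume "A \<in> U \<and> - A \<in> U"
    then have "A \<inter> - A \<in> U" using uf_Int[OF u] by blast
    then show False using uf_empty[OF u] by simp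
  qed
  moreover have "A \<in> U \<or> - A \<in> U" using u unfolding ultrafilter_nat_def by blast
  ultimately show ?thesis by blast
qed

lemma uf_Un: "ultrafilter_nat U \<Longrightarrow> A \<union> B \<in> U \<longleftrightarrow> A \<in> U \<or> B \<in> U"
proof -
  assume u: "ultrafilter_nat U"
  have "- (A \<union> B) = - A \<inter> - B" by auto
  then have "- (A \<union> B) \<in> U \<longleftrightarrow> - A \<in> U \<and> - B \<in> U" using uf_Int[OF u] by simp
  then show ?thesis using uf_Compl[OF u] by blast
qed

lemma uf_Union_finite: "ultrafilter_nat U \<Longrightarrow> finite F \<Longrightarrow> \<Union>F \<in> U \<Longrightarrow> \<exists>A\<in>F. A \<in> U"
proof -
  assume u: "ultrafilter_nat U"
  show "finite F \<Longrightarrow> \<Union>F \<in> U \<Longrightarrow> \<exists>A\<in>F. A \<in> U"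
  proof (induction F rule: finite_induct)
    case empty
    then show ?case using uf_empty[OF u] by auto
  next
    case (insert x F)
    then show ?case using uf_Un[OF u, of x "\<Union>F"] by auto
  qed
qed

lemma uf_Inter_finite: "ultrafilter_nat U \<Longrightarrow> finite F \<Longrightarrow> F \<subseteq> U \<Longrightarrow> \<Inter>F \<in> U"
proof -
  assume u: "ultrafilter_nat U"
  show "finite F \<Longrightarrow> F \<subseteq> U \<Longrightarrow> \<Inter>F \<in> U"
  proof (induction F rule: finite_induct)
    case empty
    then show ?case using uf_UNIV[OF u] by auto
  next
    case (insert x F)
    then show ?case using uf_Int[OF u, of x "\<Inter>F"] by auto
  qed
qed

lemma principal_uf_ultra: "ultrafilter_nat (principal_uf n)"
  unfolding ultrafilter_nat_def principal_uf_def by auto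

lemma uf_finite_principal:
  assumes u: "ultrafilter_nat U" and f: "finite F" and FU: "F \<in> U"
  shows "U \<in> omega_in_beta"
proof -
  have "F = \<Union>((\<lambda>n. {n}) ` F)" by auto
  then obtain n where n: "n \<in> F" "{n} \<in> U" using uf_Union_finite[OF u, of "(\<lambda>n. {n}) ` F"] f FU by auto
  have "U = principal_uf n"
  proof (intro set_eqI iffI)
    fix A assume "A \<in> U"
    then have "A \<inter> {n} \<in> U" using uf_Int[OF u] n by blast
    then show "A \<in> principal_uf n" using uf_empty[OF u] unfolding principal_uf_def
      by (cases "n \<in> A") auto
  next
    fix A assume "A \<in> principal_uf n"
    then have "{n} \<subseteq> A" unfolding principal_uf_def by auto
    then show "A \<in> U" using uf_mono[OF u n(2)] by blast
  qed
  then show ?thesis unfolding omega_in_beta_def by auto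
qed

lemma nonprincipal_cofinite:
  assumes u: "ultrafilter_nat U" and np: "U \<notin> omega_in_beta" and f: "finite F"
  shows "- F \<in> U"
  using uf_finite_principal[OF u f] np uf_Compl[OF u] by blast

definition bs :: "nat set \<Rightarrow> nat set set set" where
  "bs A = {U \<in> beta_omega. A \<in> U}"

lemma bs_sub: "bs A \<subseteq> beta_omega"
  by (auto simp: bs_def)

lemma bs_Int: "bs (A \<inter> B) = bs A \<inter> bs B"
  by (auto simp: bs_def beta_omega_def uf_Int)

lemma bs_Un: "bs (A \<union> B) = bs A \<union> bs B"
  by (auto simp: bs_def beta_omega_def uf_Un)

lemma bs_Compl: "bs (- A) = beta_omega - bs A"
  by (auto simp: bs_def beta_omega_def uf_Compl)

lemma bs_UNIV: "bs UNIV = beta_omega"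
  by (auto simp: bs_def beta_omega_def uf_UNIV)

lemma bs_empty: "bs {} = {}"
  by (auto simp: bs_def beta_omega_def uf_empty)

lemma principal_in_beta: "principal_uf n \<in> beta_omega"
  by (simp add: beta_omega_def principal_uf_ultra)

lemma bs_subset_iff: "bs A \<subseteq> bs B \<longleftrightarrow> A \<subseteq> B"
proof
  assume h: "bs A \<subseteq> bs B"
  show "A \<subseteq> B"
  proof
    fix n assume "n \<in> A"
    then have "principal_uf n \<in> bs A" unfolding bs_def using principal_in_beta[of n] by (simp add: principal_uf_def)
    then have "principal_uf n \<in> bs B" using h by blast
    then show "n \<in> B" by (simp add: bs_def principal_uf_def)
  qed
next
  assume "A \<subseteq> B" then show "bs A \<subseteq> bs B"
    by (auto simp: bs_def beta_omega_def intro: uf_mono)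
qed

lemma bs_eq_iff: "bs A = bs B \<longleftrightarrow> A = B"
  by (metis bs_subset_iff subset_antisym order_refl)

lemma bs_Union_finite: "finite F \<Longrightarrow> bs (\<Union>F) = \<Union>(bs ` F)"
  by (induction F rule: finite_induct) (auto simp: bs_empty bs_Un)

lemma bs_singleton: "bs {n} = {principal_uf n}"
proof (intro set_eqI iffI)
  fix U assume "U \<in> bs {n}"
  then have u: "ultrafilter_nat U" and n: "{n} \<in> U" by (auto simp: bs_def beta_omega_def)
  have "U = principal_uf n"
  proof (intro set_eqI iffI)
    fix A assume "A \<in> U"
    then have "A \<inter> {n} \<in> U" using uf_Int[OF u] n by blast
    then show "A \<in> principal_uf n" using uf_empty[OF u] unfolding principal_uf_def
      by (cases "n \<in> A") auto
  next
    fix A assume "A \<in> principal_uf n"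
    then have "{n} \<subseteq> A" unfolding principal_uf_def by auto
    then show "A \<in> U" using uf_mono[OF u n] by blast
  qed
  then show "U \<in> {principal_uf n}" by simp
next
  fix U assume "U \<in> {principal_uf n}"
  then show "U \<in> bs {n}" unfolding bs_def using principal_in_beta[of n] by (simp add: principal_uf_def)
qed

abbreviation "BT \<equiv> beta_omega_top"

lemma basics_eq: "{{U \<in> beta_omega. A \<in> U} | A. True} = range bs"
  by (auto simp: bs_def)

lemma BT_def': "BT = topology_generated_by (range bs)"
  unfolding beta_omega_top_def basics_eq ..

lemma topspace_BT: "topspace BT = beta_omega"
proof -
  have "\<Union>(range bs) = beta_omega" using bs_sub bs_UNIV by blast
  then show ?thesis unfolding BT_def' topology_generated_by_topspace by simp
qed

lemma gen_open_char:
  "generate_topology_on (range bs) W \<Longrightarrow> W \<subseteq> beta_omega \<and> (\<forall>U\<in>W. \<exists>A. U \<in> bs A \<and> bs A \<subseteq> W)"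
proof (induction rule: generate_topology_on.induct)
  case Empty
  then show ?case by auto
next
  case (Int a b)
  show ?case
  proof (intro conjI ballI)
    show "a \<inter> b \<subseteq> beta_omega" using Int by auto
    fix U assume "U \<in> a \<inter> b"
    then obtain A B where "U \<in> bs A" "bs A \<subseteq> a" "U \<in> bs B" "bs B \<subseteq> b" using Int by blast
    then show "\<exists>C. U \<in> bs C \<and> bs C \<subseteq> a \<inter> b"
      by (intro exI[of _ "A \<inter> B"]) (auto simp: bs_Int)
  qed
next
  case (UN K)
  show ?case
  proof (intro conjI ballI)
    show "\<Union>K \<subseteq> beta_omega" using UN by blast
    fix U assume "U \<in> \<Union>K"
    then obtain k where "k \<in> K" "U \<in> k" by blast
    then obtain A where "U \<in> bs A" "bs A \<subseteq> k" using UN by blast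
    then show "\<exists>A. U \<in> bs A \<and> bs A \<subseteq> \<Union>K" using \<open>k \<in> K\<close> by blast
  qed
next
  case (Basis s)
  then show ?case using bs_sub by blast
qed

lemma openin_BT: "openin BT W \<longleftrightarrow> W \<subseteq> beta_omega \<and> (\<forall>U\<in>W. \<exists>A. U \<in> bs A \<and> bs A \<subseteq> W)"
proof
  assume "openin BT W"
  then show "W \<subseteq> beta_omega \<and> (\<forall>U\<in>W. \<exists>A. U \<in> bs A \<and> bs A \<subseteq> W)"
    unfolding BT_def' openin_topology_generated_by_iff by (rule gen_open_char)
next
  assume h: "W \<subseteq> beta_omega \<and> (\<forall>U\<in>W. \<exists>A. U \<in> bs A \<and> bs A \<subseteq> W)"
  then have "W = \<Union>{bs A | A. bs A \<subseteq> W}" by blast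
  moreover have "generate_topology_on (range bs) (\<Union>{bs A | A. bs A \<subseteq> W})"
    by (rule generate_topology_on.UN) (auto intro: generate_topology_on.Basis)
  ultimately show "openin BT W"
    unfolding BT_def' openin_topology_generated_by_iff by simp
qed

lemma openin_bs: "openin BT (bs A)"
  unfolding openin_BT using bs_sub by blast

lemma closedin_bs: "closedin BT (bs A)"
proof -
  have "topspace BT - bs A = bs (- A)" by (simp add: topspace_BT bs_Compl)
  then show ?thesis unfolding closedin_def topspace_BT using bs_sub openin_bs
    by (metis topspace_BT)
qed

definition fip :: "nat set set \<Rightarrow> bool" where
  "fip G \<longleftrightarrow> (\<forall>F. finite F \<and> F \<subseteq> G \<longrightarrow> \<Inter>F \<noteq> {})"

lemma fip_insert:
  assumes "fip G" "\<And>F. finite F \<Longrightarrow> F \<subseteq> G \<Longrightarrow> \<Inter>F \<inter> A \<noteq> {}"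
  shows "fip (insert A G)"
  unfolding fip_def
proof (intro allI impI)
  fix F assume F: "finite F \<and> F \<subseteq> insert A G"
  show "\<Inter>F \<noteq> {}"
  proof (cases "A \<in> F")
    case True
    have "\<Inter>F = \<Inter>(F - {A}) \<inter> A" using True by auto
    then show ?thesis using assms(2)[of "F - {A}"] F by auto
  next
    case False
    then show ?thesis using assms(1) F unfolding fip_def by auto
  qed
qed

lemma ultrafilter_lemma:
  assumes "fip G"
  shows "\<exists>U. ultrafilter_nat U \<and> G \<subseteq> U"
proof -
  define Z where "Z = {H. G \<subseteq> H \<and> fip H}"
  have "\<exists>M\<in>Z. \<forall>X\<in>Z. M \<subseteq> X \<longrightarrow> X = M"
  proof (rule Zorn_Lemma2, intro ballI)
    fix C assume C: "C \<in> chains Z"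
    show "\<exists>U\<in>Z. \<forall>X\<in>C. X \<subseteq> U"
    proof (cases "C = {}")
      case True
      then show ?thesis using assms unfolding Z_def by auto
    next
      case False
      have "fip (\<Union>C)"
        unfolding fip_def
      proof (intro allI impI)
        fix F assume F: "finite F \<and> F \<subseteq> \<Union>C"
        have Cc: "subset.chain Z C" using C by (simp add: chains_alt_def)
        obtain Y where Y: "Y \<in> C" "F \<subseteq> Y"
          using finite_subset_Union_chain[OF _ _ False Cc, of F] F by blast
        have "Y \<in> Z" using Y(1) C chainsD2 by blast
        then have "fip Y" by (simp add: Z_def)
        then show "\<Inter>F \<noteq> {}" using Y F unfolding fip_def by blast
      qed
      moreover have "G \<subseteq> \<Union>C"
      proof -
        obtain Y where "Y \<in> C" using False by blast
        then have "Y \<in> Z" using C chainsD2 by blast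
        then show ?thesis using \<open>Y \<in> C\<close> by (auto simp: Z_def)
      qed
      ultimately show ?thesis unfolding Z_def by blast
    qed
  qed
  then obtain M where MZ: "M \<in> Z" and max: "\<And>X. X \<in> Z \<Longrightarrow> M \<subseteq> X \<Longrightarrow> X = M" by blast
  have GM: "G \<subseteq> M" and fM: "fip M" using MZ by (auto simp: Z_def)
  have add: "A \<in> M" if "\<And>F. finite F \<Longrightarrow> F \<subseteq> M \<Longrightarrow> \<Inter>F \<inter> A \<noteq> {}" for A
  proof -
    have "fip (insert A M)" by (rule fip_insert[OF fM that])
    then have "insert A M \<in> Z" using GM by (auto simp: Z_def)
    then have "insert A M = M" using max by blast
    then show ?thesis by blast
  qed
  have emp: "{} \<notin> M" using fM unfolding fip_def by (metis Inter_insert empty_subsetI finite.emptyI finite_insert inf_bot_left insert_subsetI)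
  have ultra: "ultrafilter_nat M"
    unfolding ultrafilter_nat_def
  proof (intro conjI allI impI)
    show "UNIV \<in> M" by (rule add) (use fM in \<open>auto simp: fip_def\<close>)
    show "{} \<notin> M" by (rule emp)
  next
    fix A B assume h: "A \<in> M \<and> A \<subseteq> B"
    show "B \<in> M"
    proof (rule add)
      fix F assume "finite F" "F \<subseteq> M"
      then have "\<Inter>(insert A F) \<noteq> {}" using fM h unfolding fip_def by auto
      then show "\<Inter>F \<inter> B \<noteq> {}" using h by auto
    qed
  next
    fix A B assume h: "A \<in> M \<and> B \<in> M"
    show "A \<inter> B \<in> M"
    proof (rule add)
      fix F assume "finite F" "F \<subseteq> M"
      then have "finite (insert A (insert B F))" "insert A (insert B F) \<subseteq> M" using h by auto
      then have "\<Inter>(insert A (insert B F)) \<noteq> {}" using fM unfolding fip_def by (elim allE[of _ "insert A (insert B F)"]) simp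
      then show "\<Inter>F \<inter> (A \<inter> B) \<noteq> {}" by auto
    qed
  next
    fix A
    show "A \<in> M \<or> - A \<in> M"
    proof (rule ccontr)
      assume n: "\<not> (A \<in> M \<or> - A \<in> M)"
      have add': "\<exists>F. finite F \<and> F \<subseteq> M \<and> \<Inter>F \<inter> X = {}" if "X \<notin> M" for X
      proof (rule ccontr)
        assume "\<not> (\<exists>F. finite F \<and> F \<subseteq> M \<and> \<Inter>F \<inter> X = {})"
        then have "X \<in> M" by (intro add) auto
        then show False using that by simp
      qed
      obtain F1 where F1: "finite F1" "F1 \<subseteq> M" "\<Inter>F1 \<inter> A = {}" using add'[of A] n by blast
      obtain F2 where F2: "finite F2" "F2 \<subseteq> M" "\<Inter>F2 \<inter> - A = {}" using add'[of "- A"] n by blast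
      have "\<Inter>(F1 \<union> F2) = {}" using F1(3) F2(3) by auto
      then show False using fM F1 F2 unfolding fip_def by (meson finite_UnI le_sup_iff)
    qed
  qed
  show ?thesis using ultra GM by blast
qed

lemma compact_BT: "compact_space BT"
  unfolding compact_space_fip
proof (intro allI impI)
  fix \<U> assume h: "(\<forall>C\<in>\<U>. closedin BT C) \<and> (\<forall>\<F>. finite \<F> \<and> \<F> \<subseteq> \<U> \<longrightarrow> \<Inter>\<F> \<noteq> {})"
  define G where "G = {B. \<exists>C\<in>\<U>. C \<subseteq> bs B}"
  have "fip G"
    unfolding fip_def
  proof (intro allI impI)
    fix F assume F: "finite F \<and> F \<subseteq> G"
    then have "\<forall>B\<in>F. \<exists>C. C \<in> \<U> \<and> C \<subseteq> bs B" unfolding G_def by blast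
    then obtain c where c: "\<And>B. B \<in> F \<Longrightarrow> c B \<in> \<U> \<and> c B \<subseteq> bs B" by metis
    have "finite (c ` F)" "c ` F \<subseteq> \<U>" using F c by auto
    then have "\<Inter>(c ` F) \<noteq> {}" using h by blast
    then obtain U where U: "U \<in> \<Inter>(c ` F)" by blast
    show "\<Inter>F \<noteq> {}"
    proof (cases "F = {}")
      case True then show ?thesis by simp
    next
      case False
      then obtain B0 where "B0 \<in> F" by blast
      then have "U \<in> bs B0" using U c by blast
      then have u: "ultrafilter_nat U" by (simp add: bs_def beta_omega_def)
      have "F \<subseteq> U" using U c by (auto simp: bs_def)
      then have "\<Inter>F \<in> U" using uf_Inter_finite[OF u] F by blast
      then show ?thesis using uf_empty[OF u] by auto
    qed
  qed
  then obtain V where V: "ultrafilter_nat V" "G \<subseteq> V" using ultrafilter_lemma by blast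
  have "V \<in> \<Inter>\<U>"
  proof
    fix C assume C: "C \<in> \<U>"
    show "V \<in> C"
    proof (rule ccontr)
      assume "V \<notin> C"
      have "V \<in> topspace BT" using V by (simp add: topspace_BT beta_omega_def)
      then have "V \<in> topspace BT - C" using \<open>V \<notin> C\<close> by blast
      moreover have "openin BT (topspace BT - C)" using h C by (simp add: closedin_def)
      ultimately obtain A where A: "V \<in> bs A" "bs A \<subseteq> topspace BT - C" unfolding openin_BT by blast
      have "C \<subseteq> topspace BT" using h C closedin_subset by blast
      then have "C \<subseteq> bs (- A)" using A by (auto simp: bs_Compl topspace_BT)
      then have "- A \<in> G" using C unfolding G_def by blast
      then have "- A \<in> V" using V by blast
      moreover have "A \<in> V" using A by (simp add: bs_def)
      ultimately show False using uf_Compl[OF V(1)] by blast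
    qed
  qed
  then show "\<Inter>\<U> \<noteq> {}" by blast
qed

lemma Hausdorff_BT: "Hausdorff_space BT"
  unfolding Hausdorff_space_def
proof (intro allI impI)
  fix x y assume h: "x \<in> topspace BT \<and> y \<in> topspace BT \<and> x \<noteq> y"
  then have ux: "ultrafilter_nat x" and uy: "ultrafilter_nat y" by (auto simp: topspace_BT beta_omega_def)
  have "\<exists>A. A \<in> x \<and> A \<notin> y"
  proof (rule ccontr)
    assume "\<not> (\<exists>A. A \<in> x \<and> A \<notin> y)"
    then have xy: "x \<subseteq> y" by blast
    have "y \<subseteq> x"
    proof
      fix A assume "A \<in> y"
      show "A \<in> x"
      proof (rule ccontr)
        assume "A \<notin> x"
        then have "- A \<in> x" using uf_Compl[OF ux] by blast
        then have "- A \<in> y" using xy by blast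
        then show False using \<open>A \<in> y\<close> uf_Compl[OF uy] by blast
      qed
    qed
    then show False using xy h by blast
  qed
  then obtain A where "A \<in> x" "A \<notin> y" by blast
  then have "x \<in> bs A" "y \<in> bs (- A)" using h uf_Compl[OF uy] by (auto simp: bs_def topspace_BT)
  moreover have "disjnt (bs A) (bs (- A))" by (auto simp: bs_Compl disjnt_def)
  ultimately show "\<exists>U V. openin BT U \<and> openin BT V \<and> x \<in> U \<and> y \<in> V \<and> disjnt U V"
    using openin_bs by blast
qed

lemma closed_compact: "closedin BT K \<Longrightarrow> compactin BT K"
  using closedin_compact_space compact_BT by blast

lemma compact_closed: "compactin BT K \<Longrightarrow> closedin BT K"
  using compactin_imp_closedin Hausdorff_BT by blast

lemma compact_in_open_bs:
  assumes K: "compactin BT K" and W: "openin BT W" and KW: "K \<subseteq> W"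
  shows "\<exists>A. K \<subseteq> bs A \<and> bs A \<subseteq> W"
proof -
  define \<U> where "\<U> = bs ` {A. bs A \<subseteq> W}"
  have "\<forall>U\<in>\<U>. openin BT U" unfolding \<U>_def using openin_bs by blast
  moreover have "K \<subseteq> \<Union>\<U>" using KW W unfolding openin_BT \<U>_def by blast
  ultimately obtain \<F> where F: "finite \<F>" "\<F> \<subseteq> \<U>" "K \<subseteq> \<Union>\<F>"
    using K unfolding compactin_def by meson
  then obtain \<A> where A: "finite \<A>" "\<A> \<subseteq> {A. bs A \<subseteq> W}" "\<F> = bs ` \<A>"
    unfolding \<U>_def by (meson finite_subset_image)
  have "bs (\<Union>\<A>) = \<Union>\<F>" using A bs_Union_finite by simp
  then show ?thesis using F A by (intro exI[of _ "\<Union>\<A>"]) auto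
qed



section \<open>Essential infimum and a Sikorski-type extension into a measure algebra\<close>

lemma (in finite_measure) ess_inf_exists:
  assumes Y: "\<Y> \<subseteq> sets M" "\<Y> \<noteq> {}"
  shows "\<exists>\<Y>0. countable \<Y>0 \<and> \<Y>0 \<subseteq> \<Y> \<and> \<Y>0 \<noteq> {} \<and> (\<forall>Y\<in>\<Y>. AE x in M. x \<in> \<Inter>\<Y>0 \<longrightarrow> x \<in> Y)"
proof -
  define fam where "fam = {\<Z>. countable \<Z> \<and> \<Z> \<subseteq> \<Y> \<and> \<Z> \<noteq> {}}"
  define V where "V = (\<lambda>\<Z>. measure M (\<Inter>\<Z>)) ` fam"
  have Inter_sets: "\<Inter>\<Z> \<in> sets M" if "\<Z> \<in> fam" for \<Z>
  proof -
    have "(\<Inter>x\<in>\<Z>. x) \<in> sets M"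
      using that Y unfolding fam_def by (intro sets.countable_INT') auto
    then show ?thesis by simp
  qed
  obtain Y0 where Y0: "Y0 \<in> \<Y>" using Y by blast
  have famne: "{Y0} \<in> fam" using Y0 by (simp add: fam_def)
  have Vne: "V \<noteq> {}" using famne by (auto simp: V_def)
  have Vbdd: "bdd_below V" by (auto simp: V_def intro!: bdd_belowI[of _ 0])
  define m where "m = Inf V"
  have "\<forall>k::nat. \<exists>\<Z>\<in>fam. measure M (\<Inter>\<Z>) < m + 1 / (Suc k)"
  proof
    fix k :: nat
    have "Inf V < m + 1 / Suc k" by (simp add: m_def)
    then obtain v where "v \<in> V" "v < m + 1 / Suc k" using cInf_less_iff[OF Vne Vbdd] by blast
    then show "\<exists>\<Z>\<in>fam. measure M (\<Inter>\<Z>) < m + 1 / (Suc k)" by (auto simp: V_def)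
  qed
  then obtain Z where Z: "\<And>k. Z k \<in> fam" "\<And>k. measure M (\<Inter>(Z k)) < m + 1 / (Suc k)" by metis
  define \<Y>0 where "\<Y>0 = (\<Union>k. Z k)"
  have Y0fam: "\<Y>0 \<in> fam" using Z(1) unfolding fam_def \<Y>0_def by (auto intro: countable_UN)
  have le: "measure M (\<Inter>\<Y>0) \<le> m"
  proof (rule field_le_epsilon)
    fix e :: real assume e: "0 < e"
    obtain k :: nat where k: "1 / Suc k < e"
      using e by (metis nat_approx_posE)
    have "\<Inter>\<Y>0 \<subseteq> \<Inter>(Z k)" unfolding \<Y>0_def by blast
    then have "measure M (\<Inter>\<Y>0) \<le> measure M (\<Inter>(Z k))"
      using Inter_sets[OF Z(1)[of k]] by (intro finite_measure_mono) auto
    then show "measure M (\<Inter>\<Y>0) \<le> m + e" using Z(2)[of k] k by linarith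
  qed
  have "AE x in M. x \<in> \<Inter>\<Y>0 \<longrightarrow> x \<in> Y" if YY: "Y \<in> \<Y>" for Y
  proof -
    have f2: "insert Y \<Y>0 \<in> fam" using Y0fam YY by (auto simp: fam_def)
    have "measure M (\<Inter>(insert Y \<Y>0)) \<in> V" using f2 unfolding V_def by (rule imageI)
    then have "m \<le> measure M (\<Inter>(insert Y \<Y>0))"
      unfolding m_def by (rule cInf_lower[OF _ Vbdd])
    then have ge: "m \<le> measure M (\<Inter>\<Y>0 \<inter> Y)" by (simp add: Int_commute)
    have Ysets: "Y \<in> sets M" using YY Y by blast
    have "measure M (\<Inter>\<Y>0 - Y) = measure M (\<Inter>\<Y>0) - measure M (\<Inter>\<Y>0 \<inter> Y)"
      using Inter_sets[OF Y0fam] Ysets by (rule finite_measure_Diff')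
    then have "measure M (\<Inter>\<Y>0 - Y) = 0" using le ge measure_nonneg[of M "\<Inter>\<Y>0 - Y"] by linarith
    then have "\<Inter>\<Y>0 - Y \<in> null_sets M"
      using Inter_sets[OF Y0fam] Ysets by (simp add: emeasure_eq_measure null_sets_def)
    then have "AE x in M. x \<notin> \<Inter>\<Y>0 - Y" by (rule AE_not_in)
    then show ?thesis by eventually_elim auto
  qed
  then show ?thesis using Y0fam unfolding fam_def by blast
qed

locale hom_setup = prob_space M for M :: "'a measure" +
  fixes SS :: "'a set set" and U :: "nat set \<Rightarrow> 'a set"
  assumes SS_sigma: "sigma_algebra (space M) SS" and SS_sets: "SS \<subseteq> sets M"
    and U_SS: "U A \<in> SS" and U_mono: "A \<subseteq> B \<Longrightarrow> U A \<subseteq> U B"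
    and U_Un: "U (A \<union> B) \<subseteq> U A \<union> U B" and U_empty: "U {} = {}"
    and U_UNIV: "U UNIV = space M"
begin

interpretation SSa: sigma_algebra "space M" SS by (rule SS_sigma)

definition valid :: "(nat set \<times> 'a set) set \<Rightarrow> bool" where
  "valid R \<longleftrightarrow>
     (\<forall>A S. (A,S) \<in> R \<longrightarrow> S \<in> SS \<and> (AE x in M. x \<in> S \<longrightarrow> x \<in> U A)) \<and>
     (\<forall>A S S'. (A,S) \<in> R \<longrightarrow> (A,S') \<in> R \<longrightarrow> (AE x in M. x \<in> S \<longleftrightarrow> x \<in> S')) \<and>
     (\<forall>A S. (A,S) \<in> R \<longrightarrow> (\<exists>S'. (- A,S') \<in> R \<and> (AE x in M. x \<in> S' \<longleftrightarrow> x \<notin> S))) \<and>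
     (\<forall>A S B T. (A,S) \<in> R \<longrightarrow> (B,T) \<in> R \<longrightarrow>
         (\<exists>Q. (A \<inter> B, Q) \<in> R \<and> (AE x in M. x \<in> Q \<longleftrightarrow> x \<in> S \<and> x \<in> T))) \<and>
     (\<exists>S. (UNIV, S) \<in> R)"

lemma valid_base: "valid {(UNIV, space M), ({}, {})}"
  unfolding valid_def using SSa.top SSa.empty_sets by (auto simp: U_UNIV)

lemma valid_chain:
  assumes C: "C \<in> chains {R. valid R}" and ne: "C \<noteq> {}"
  shows "valid (\<Union>C)"
proof -
  have vC: "\<And>R. R \<in> C \<Longrightarrow> valid R" using C chainsD2 by blast
  have cmp: "\<And>R1 R2. R1 \<in> C \<Longrightarrow> R2 \<in> C \<Longrightarrow> R1 \<subseteq> R2 \<or> R2 \<subseteq> R1"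
    using C unfolding chains_def chain_subset_def by blast
  have two: "\<exists>R\<in>C. p \<in> R \<and> q \<in> R" if pq: "p \<in> \<Union>C" "q \<in> \<Union>C" for p q
  proof -
    obtain R1 R2 where "R1 \<in> C" "R2 \<in> C" "p \<in> R1" "q \<in> R2" using pq by blast
    then show ?thesis using cmp[of R1 R2] by blast
  qed
  show ?thesis
    unfolding valid_def
  proof (intro conjI allI impI)
    fix A S assume "(A, S) \<in> \<Union>C"
    then obtain R where "R \<in> C" "(A,S) \<in> R" by blast
    then show "S \<in> SS" using vC unfolding valid_def by blast
  next
    fix A S assume "(A, S) \<in> \<Union>C"
    then obtain R where "R \<in> C" "(A,S) \<in> R" by blast
    then show "AE x in M. x \<in> S \<longrightarrow> x \<in> U A" using vC unfolding valid_def by blast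
  next
    fix A S S' assume "(A, S) \<in> \<Union>C" "(A, S') \<in> \<Union>C"
    then obtain R where "R \<in> C" "(A,S) \<in> R" "(A,S') \<in> R" using two by blast
    then show "AE x in M. x \<in> S \<longleftrightarrow> x \<in> S'" using vC unfolding valid_def by blast
  next
    fix A S assume "(A, S) \<in> \<Union>C"
    then obtain R where R: "R \<in> C" "(A,S) \<in> R" by blast
    then obtain S' where "(- A, S') \<in> R" "AE x in M. x \<in> S' \<longleftrightarrow> x \<notin> S"
      using vC[OF R(1)] unfolding valid_def by blast
    then show "\<exists>S'. (- A, S') \<in> \<Union>C \<and> (AE x in M. x \<in> S' \<longleftrightarrow> x \<notin> S)" using R by blast
  next
    fix A S B T assume "(A, S) \<in> \<Union>C" "(B, T) \<in> \<Union>C"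
    then obtain R where R: "R \<in> C" "(A,S) \<in> R" "(B,T) \<in> R" using two by blast
    then obtain Q where "(A \<inter> B, Q) \<in> R" "AE x in M. x \<in> Q \<longleftrightarrow> x \<in> S \<and> x \<in> T"
      using vC[OF R(1)] unfolding valid_def by blast
    then show "\<exists>Q. (A \<inter> B, Q) \<in> \<Union>C \<and> (AE x in M. x \<in> Q \<longleftrightarrow> x \<in> S \<and> x \<in> T)" using R by blast
  next
    obtain R where "R \<in> C" using ne by blast
    then show "\<exists>S. (UNIV, S) \<in> \<Union>C" using vC unfolding valid_def by blast
  qed
qed

lemma extend:
  assumes v: "valid R" and A0: "\<And>S. (A0,S) \<notin> R"
  shows "\<exists>R'. valid R' \<and> R \<subseteq> R' \<and> (\<exists>S. (A0,S) \<in> R')"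
proof -
  have R1: "\<And>A S. (A,S) \<in> R \<Longrightarrow> S \<in> SS"
    and R2: "\<And>A S. (A,S) \<in> R \<Longrightarrow> AE x in M. x \<in> S \<longrightarrow> x \<in> U A"
    and R3: "\<And>A S. (A,S) \<in> R \<Longrightarrow> \<exists>S'. (- A,S') \<in> R \<and> (AE x in M. x \<in> S' \<longleftrightarrow> x \<notin> S)"
    and R4: "\<And>A S B T. (A,S) \<in> R \<Longrightarrow> (B,T) \<in> R \<Longrightarrow>
         \<exists>Q. (A \<inter> B, Q) \<in> R \<and> (AE x in M. x \<in> Q \<longleftrightarrow> x \<in> S \<and> x \<in> T)"
    and R5: "\<exists>S. (UNIV, S) \<in> R"
    using v unfolding valid_def by blast+
  obtain SU where SU: "(UNIV, SU) \<in> R" using R5 by blast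
  obtain T0 where T0: "(- UNIV, T0) \<in> R" using R3[OF SU] by blast
  have T0': "({}, T0) \<in> R" using T0 by simp
  define \<Y> where "\<Y> = {(space M - S) \<union> U (C \<inter> A0) | C S. (C,S) \<in> R}"
  have YSS: "\<Y> \<subseteq> SS" unfolding \<Y>_def using R1 U_SS by auto
  have Ysets: "\<Y> \<subseteq> sets M" using YSS SS_sets by blast
  have Yne: "\<Y> \<noteq> {}" using SU unfolding \<Y>_def by blast
  obtain \<Y>0 where Y0: "countable \<Y>0" "\<Y>0 \<subseteq> \<Y>" "\<Y>0 \<noteq> {}"
    and Y0ae: "\<And>Y. Y \<in> \<Y> \<Longrightarrow> AE x in M. x \<in> \<Inter>\<Y>0 \<longrightarrow> x \<in> Y"
    using ess_inf_exists[OF Ysets Yne] by blast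
  define b where "b = \<Inter>\<Y>0"
  have bSS: "b \<in> SS"
  proof -
    have "(\<Inter>x\<in>\<Y>0. x) \<in> SS" using Y0 YSS by (intro SSa.countable_INT') auto
    then show ?thesis by (simp add: b_def)
  qed
  have B1: "AE x in M. x \<in> b \<and> x \<in> S \<longrightarrow> x \<in> U (C \<inter> A0)" if "(C,S) \<in> R" for C S
  proof -
    have "(space M - S) \<union> U (C \<inter> A0) \<in> \<Y>" using that unfolding \<Y>_def by blast
    from Y0ae[OF this] show ?thesis unfolding b_def by eventually_elim auto
  qed
  have B2: "AE x in M. x \<in> S \<and> x \<notin> U (C - A0) \<longrightarrow> x \<in> b" if CS: "(C,S) \<in> R" for C S
  proof -
    have "\<forall>Y\<in>\<Y>0. AE x in M. x \<in> S \<and> x \<notin> U (C - A0) \<longrightarrow> x \<in> Y"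
    proof
      fix Y assume "Y \<in> \<Y>0"
      then obtain C' S' where Y: "Y = (space M - S') \<union> U (C' \<inter> A0)" and C'S': "(C',S') \<in> R"
        using Y0(2) unfolding \<Y>_def by blast
      obtain Q where Q: "(C \<inter> C', Q) \<in> R" "AE x in M. x \<in> Q \<longleftrightarrow> x \<in> S \<and> x \<in> S'"
        using R4[OF CS C'S'] by blast
      have QU: "AE x in M. x \<in> Q \<longrightarrow> x \<in> U (C \<inter> C')" using R2[OF Q(1)] .
      have sub: "U (C \<inter> C') \<subseteq> U (C - A0) \<union> U (C' \<inter> A0)"
      proof -
        have "C \<inter> C' \<subseteq> (C - A0) \<union> (C' \<inter> A0)" by blast
        then show ?thesis using U_mono U_Un by blast
      qed
      show "AE x in M. x \<in> S \<and> x \<notin> U (C - A0) \<longrightarrow> x \<in> Y"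
        using Q(2) QU AE_space
      proof eventually_elim
        case (elim x)
        then show ?case using sub Y by auto
      qed
    qed
    then have "AE x in M. \<forall>Y\<in>\<Y>0. x \<in> S \<and> x \<notin> U (C - A0) \<longrightarrow> x \<in> Y"
      by (rule AE_ball_countable[OF Y0(1), THEN iffD2])
    then show ?thesis unfolding b_def by eventually_elim blast
  qed
  have L1: "AE x in M. x \<in> b \<and> x \<in> S \<longrightarrow> x \<in> S'"
    if CS: "(C,S) \<in> R" and CS': "(C',S') \<in> R" and sub: "C \<inter> A0 \<subseteq> C'" for C S C' S'
  proof -
    obtain Sc where Sc: "(- C', Sc) \<in> R" "AE x in M. x \<in> Sc \<longleftrightarrow> x \<notin> S'" using R3[OF CS'] by blast
    obtain Q where Q: "(C \<inter> - C', Q) \<in> R" "AE x in M. x \<in> Q \<longleftrightarrow> x \<in> S \<and> x \<in> Sc"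
      using R4[OF CS Sc(1)] by blast
    have e: "U ((C \<inter> - C') \<inter> A0) = {}" using sub U_empty by (metis Int_assoc Int_commute Int_left_commute compl_le_swap1 disjoint_eq_subset_Compl double_compl)
    show ?thesis using B1[OF Q(1)] Q(2) Sc(2) by eventually_elim (use e in auto)
  qed
  have L2: "AE x in M. x \<in> T \<and> x \<notin> b \<longrightarrow> x \<in> T'"
    if DT: "(D,T) \<in> R" and DT': "(D',T') \<in> R" and sub: "D - A0 \<subseteq> D'" for D T D' T'
  proof -
    obtain Tc where Tc: "(- D', Tc) \<in> R" "AE x in M. x \<in> Tc \<longleftrightarrow> x \<notin> T'" using R3[OF DT'] by blast
    obtain Q where Q: "(D \<inter> - D', Q) \<in> R" "AE x in M. x \<in> Q \<longleftrightarrow> x \<in> T \<and> x \<in> Tc"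
      using R4[OF DT Tc(1)] by blast
    have e: "U ((D \<inter> - D') - A0) = {}" using sub U_empty
      by (metis Diff_eq Int_assoc Int_commute compl_le_swap1 disjoint_eq_subset_Compl double_compl)
    show ?thesis using B2[OF Q(1)] Q(2) Tc(2) by eventually_elim (use e in auto)
  qed
  define R' where "R' = {((C \<inter> A0) \<union> (D - A0), (S \<inter> b) \<union> (T - b)) | C S D T. (C,S) \<in> R \<and> (D,T) \<in> R}"
  have RR': "R \<subseteq> R'"
  proof
    fix p assume "p \<in> R"
    then obtain C S where p: "p = (C,S)" "(C,S) \<in> R" by (cases p) auto
    have "((C \<inter> A0) \<union> (C - A0), (S \<inter> b) \<union> (S - b)) \<in> R'" unfolding R'_def using p by blast
    moreover have "(C \<inter> A0) \<union> (C - A0) = C" "(S \<inter> b) \<union> (S - b) = S" by auto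
    ultimately show "p \<in> R'" using p by simp
  qed
  have A0R': "\<exists>S. (A0, S) \<in> R'"
  proof -
    have "((UNIV \<inter> A0) \<union> ({} - A0), (SU \<inter> b) \<union> (T0 - b)) \<in> R'" unfolding R'_def using SU T0' by blast
    then show ?thesis by auto
  qed
  have vR': "valid R'"
    unfolding valid_def
  proof (intro conjI allI impI)
    fix E V assume "(E, V) \<in> R'"
    then obtain C S D T where E: "E = (C \<inter> A0) \<union> (D - A0)" "V = (S \<inter> b) \<union> (T - b)"
      and CS: "(C,S) \<in> R" and DT: "(D,T) \<in> R" unfolding R'_def by blast
    show "V \<in> SS" using E R1[OF CS] R1[OF DT] bSS by auto
  next
    fix E V assume "(E, V) \<in> R'"
    then obtain C S D T where E: "E = (C \<inter> A0) \<union> (D - A0)" "V = (S \<inter> b) \<union> (T - b)"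
      and CS: "(C,S) \<in> R" and DT: "(D,T) \<in> R" unfolding R'_def by blast
    show "AE x in M. x \<in> V \<longrightarrow> x \<in> U E"
    proof -
      have s1: "U (C \<inter> A0) \<subseteq> U E" "U (D - A0) \<subseteq> U E" using E U_mono by auto
      show ?thesis using B1[OF CS] B2[OF DT] by eventually_elim (use s1 E in auto)
    qed
  next
    fix E V V' assume "(E, V) \<in> R'" "(E, V') \<in> R'"
    then obtain C S D T C' S' D' T' where E: "E = (C \<inter> A0) \<union> (D - A0)" "V = (S \<inter> b) \<union> (T - b)"
      and CS: "(C,S) \<in> R" and DT: "(D,T) \<in> R"
      and E': "E = (C' \<inter> A0) \<union> (D' - A0)" "V' = (S' \<inter> b) \<union> (T' - b)"
      and CS': "(C',S') \<in> R" and DT': "(D',T') \<in> R" unfolding R'_def by blast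
    have s: "C \<inter> A0 \<subseteq> C'" "C' \<inter> A0 \<subseteq> C" "D - A0 \<subseteq> D'" "D' - A0 \<subseteq> D"
      using E(1) E'(1) by blast+
    show "AE x in M. x \<in> V \<longleftrightarrow> x \<in> V'"
      using L1[OF CS CS' s(1)] L1[OF CS' CS s(2)] L2[OF DT DT' s(3)] L2[OF DT' DT s(4)]
      by eventually_elim (use E E' in auto)
  next
    fix E V assume "(E, V) \<in> R'"
    then obtain C S D T where E: "E = (C \<inter> A0) \<union> (D - A0)" "V = (S \<inter> b) \<union> (T - b)"
      and CS: "(C,S) \<in> R" and DT: "(D,T) \<in> R" unfolding R'_def by blast
    obtain Sc where Sc: "(- C, Sc) \<in> R" "AE x in M. x \<in> Sc \<longleftrightarrow> x \<notin> S" using R3[OF CS] by blast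
    obtain Tc where Tc: "(- D, Tc) \<in> R" "AE x in M. x \<in> Tc \<longleftrightarrow> x \<notin> T" using R3[OF DT] by blast
    have "((- C \<inter> A0) \<union> (- D - A0), (Sc \<inter> b) \<union> (Tc - b)) \<in> R'" unfolding R'_def using Sc Tc by blast
    moreover have "(- C \<inter> A0) \<union> (- D - A0) = - E" using E by auto
    moreover have "AE x in M. x \<in> (Sc \<inter> b) \<union> (Tc - b) \<longleftrightarrow> x \<notin> V"
      using Sc(2) Tc(2) by eventually_elim (use E in auto)
    ultimately show "\<exists>S'. (- E, S') \<in> R' \<and> (AE x in M. x \<in> S' \<longleftrightarrow> x \<notin> V)" by auto
  next
    fix E V E' V' assume "(E, V) \<in> R'" "(E', V') \<in> R'"
    then obtain C S D T C' S' D' T' where E: "E = (C \<inter> A0) \<union> (D - A0)" "V = (S \<inter> b) \<union> (T - b)"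
      and CS: "(C,S) \<in> R" and DT: "(D,T) \<in> R"
      and E': "E' = (C' \<inter> A0) \<union> (D' - A0)" "V' = (S' \<inter> b) \<union> (T' - b)"
      and CS': "(C',S') \<in> R" and DT': "(D',T') \<in> R" unfolding R'_def by blast
    obtain Q1 where Q1: "(C \<inter> C', Q1) \<in> R" "AE x in M. x \<in> Q1 \<longleftrightarrow> x \<in> S \<and> x \<in> S'" using R4[OF CS CS'] by blast
    obtain Q2 where Q2: "(D \<inter> D', Q2) \<in> R" "AE x in M. x \<in> Q2 \<longleftrightarrow> x \<in> T \<and> x \<in> T'" using R4[OF DT DT'] by blast
    have "(((C \<inter> C') \<inter> A0) \<union> ((D \<inter> D') - A0), (Q1 \<inter> b) \<union> (Q2 - b)) \<in> R'" unfolding R'_def using Q1 Q2 by blast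
    moreover have "((C \<inter> C') \<inter> A0) \<union> ((D \<inter> D') - A0) = E \<inter> E'" using E E' by auto
    moreover have "AE x in M. x \<in> (Q1 \<inter> b) \<union> (Q2 - b) \<longleftrightarrow> x \<in> V \<and> x \<in> V'"
      using Q1(2) Q2(2) by eventually_elim (use E E' in auto)
    ultimately show "\<exists>Q. (E \<inter> E', Q) \<in> R' \<and> (AE x in M. x \<in> Q \<longleftrightarrow> x \<in> V \<and> x \<in> V')" by auto
  next
    show "\<exists>S. (UNIV, S) \<in> R'" using SU RR' by blast
  qed
  show ?thesis using vR' RR' A0R' by blast
qed

lemma hom_exists:
  "\<exists>h. \<forall>A B. h A \<in> SS \<and> (AE x in M. x \<in> h A \<longrightarrow> x \<in> U A) \<and>
          (AE x in M. x \<in> h (- A) \<longleftrightarrow> x \<notin> h A) \<and>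
          (AE x in M. x \<in> h (A \<inter> B) \<longleftrightarrow> x \<in> h A \<and> x \<in> h B)"
proof -
  have "\<exists>Rm\<in>{R. valid R}. \<forall>X\<in>{R. valid R}. Rm \<subseteq> X \<longrightarrow> X = Rm"
  proof (rule Zorn_Lemma2, intro ballI)
    fix C assume C: "C \<in> chains {R. valid R}"
    show "\<exists>U\<in>{R. valid R}. \<forall>X\<in>C. X \<subseteq> U"
    proof (cases "C = {}")
      case True then show ?thesis using valid_base by blast
    next
      case False then show ?thesis using valid_chain[OF C] by blast
    qed
  qed
  then obtain R where vR: "valid R" and max: "\<And>X. valid X \<Longrightarrow> R \<subseteq> X \<Longrightarrow> X = R" by blast
  have dom: "\<exists>S. (A, S) \<in> R" for A
  proof (rule ccontr)
    assume "\<not> (\<exists>S. (A, S) \<in> R)"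
    then obtain R' where "valid R'" "R \<subseteq> R'" "\<exists>S. (A,S) \<in> R'" using extend[OF vR] by blast
    then show False using max \<open>\<not> (\<exists>S. (A, S) \<in> R)\<close> by blast
  qed
  define h where "h A = (SOME S. (A, S) \<in> R)" for A
  have hR: "(A, h A) \<in> R" for A unfolding h_def using dom[of A] by (rule someI_ex)
  have R1: "\<And>A S. (A,S) \<in> R \<Longrightarrow> S \<in> SS \<and> (AE x in M. x \<in> S \<longrightarrow> x \<in> U A)"
    and R2: "\<And>A S S'. (A,S) \<in> R \<Longrightarrow> (A,S') \<in> R \<Longrightarrow> (AE x in M. x \<in> S \<longleftrightarrow> x \<in> S')"
    and R3: "\<And>A S. (A,S) \<in> R \<Longrightarrow> \<exists>S'. (- A,S') \<in> R \<and> (AE x in M. x \<in> S' \<longleftrightarrow> x \<notin> S)"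
    and R4: "\<And>A S B T. (A,S) \<in> R \<Longrightarrow> (B,T) \<in> R \<Longrightarrow>
         \<exists>Q. (A \<inter> B, Q) \<in> R \<and> (AE x in M. x \<in> Q \<longleftrightarrow> x \<in> S \<and> x \<in> T)"
    using vR unfolding valid_def by blast+
  have "h A \<in> SS \<and> (AE x in M. x \<in> h A \<longrightarrow> x \<in> U A) \<and>
          (AE x in M. x \<in> h (- A) \<longleftrightarrow> x \<notin> h A) \<and>
          (AE x in M. x \<in> h (A \<inter> B) \<longleftrightarrow> x \<in> h A \<and> x \<in> h B)" for A B
  proof (intro conjI)
    show "h A \<in> SS" "AE x in M. x \<in> h A \<longrightarrow> x \<in> U A" using R1[OF hR] by auto
    obtain S' where S': "(- A, S') \<in> R" "AE x in M. x \<in> S' \<longleftrightarrow> x \<notin> h A" using R3[OF hR] by blast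
    show "AE x in M. x \<in> h (- A) \<longleftrightarrow> x \<notin> h A"
      using R2[OF hR S'(1)] S'(2) by eventually_elim auto
    obtain Q where Q: "(A \<inter> B, Q) \<in> R" "AE x in M. x \<in> Q \<longleftrightarrow> x \<in> h A \<and> x \<in> h B"
      using R4[OF hR hR] by blast
    show "AE x in M. x \<in> h (A \<inter> B) \<longleftrightarrow> x \<in> h A \<and> x \<in> h B"
      using R2[OF hR Q(1)] Q(2) by eventually_elim auto
  qed
  then show ?thesis by blast
qed

end



section \<open>The concrete measure algebra on [0,1) with dyadic intervals\<close>

definition Om :: "real set" where "Om = {0..<1}"
definition LM :: "real measure" where "LM = restrict_space lborel Om"

definition fl :: "nat \<Rightarrow> real \<Rightarrow> nat" where "fl k y = nat \<lfloor>2^k * y\<rfloor>"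
definition DK :: "nat \<Rightarrow> nat set \<Rightarrow> real set" where "DK k J = {y \<in> Om. fl k y \<in> J}"
definition lev :: "nat \<Rightarrow> nat" where "lev n = fst (prod_decode n)"
definition idx :: "nat \<Rightarrow> nat" where "idx n = snd (prod_decode n)"
definition Iv :: "nat \<Rightarrow> real set" where "Iv n = DK (lev n) {idx n}"
definition UU :: "nat set \<Rightarrow> real set" where "UU A = {y \<in> Om. infinite {n \<in> A. y \<in> Iv n}}"
definition SD :: "real set set" where "SD = sigma_sets Om (range Iv)"

lemma space_LM: "space LM = Om"
  by (simp add: LM_def space_restrict_space)

lemma Om_sets: "Om \<in> sets borel"
  unfolding Om_def by (rule atLeastLessThan_borel)

lemma Ico_fmeas: "a \<le> b \<Longrightarrow> {a..<(b::real)} \<in> fmeasurable lborel"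
  by (simp add: fmeasurable_def atLeastLessThan_borel)

lemma Om_Ico_sets: "Om \<inter> {a..<(b::real)} \<in> sets borel"
  using Om_sets atLeastLessThan_borel by (rule sets.Int)

lemma sets_LM_iff: "S \<in> sets LM \<longleftrightarrow> S \<subseteq> Om \<and> S \<in> sets lborel"
  unfolding LM_def by (rule sets_restrict_space_iff) (simp add: Om_sets)

lemma measure_LM: "S \<subseteq> Om \<Longrightarrow> measure LM S = measure lborel S"
  unfolding LM_def by (rule measure_restrict_space) (simp_all add: Om_sets)

lemma prob_LM: "prob_space LM"
proof (rule prob_spaceI)
  have "emeasure LM Om = emeasure lborel Om"
    unfolding LM_def by (rule emeasure_restrict_space) (simp_all add: Om_sets)
  then show "emeasure LM (space LM) = 1" by (simp add: space_LM Om_def)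
qed

interpretation LMp: prob_space LM by (rule prob_LM)

lemma fl_div:
  assumes "0 \<le> y"
  shows "fl k y = fl (k + d) y div 2^d"
proof -
  have "\<lfloor>(2^(k+d)*y) / real_of_int (2^d)\<rfloor> = \<lfloor>2^(k+d)*y\<rfloor> div 2^d"
    by (rule floor_divide_real_eq_div) simp
  moreover have "(2^(k+d)*y) / real_of_int (2^d) = 2^k*y" by (simp add: power_add)
  ultimately have e: "\<lfloor>2^k*y\<rfloor> = \<lfloor>2^(k+d)*y\<rfloor> div 2^d" by simp
  have "0 \<le> \<lfloor>2^(k+d)*y\<rfloor>" using assms by simp
  then show ?thesis unfolding fl_def e by (simp add: nat_div_distrib nat_power_eq)
qed

lemma fl_div':
  assumes "0 \<le> y" "k \<le> k'"
  shows "fl k y = fl k' y div 2^(k' - k)"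
  using fl_div[OF assms(1), of k "k' - k"] assms(2) by simp

lemma fl_less: "y \<in> Om \<Longrightarrow> fl k y < 2^k"
proof -
  assume y: "y \<in> Om"
  then have "2^k * y < 2^k" by (simp add: Om_def)
  then have "\<lfloor>2^k * y\<rfloor> < 2^k" by (simp add: floor_less_iff)
  then show ?thesis unfolding fl_def using y by (simp add: Om_def nat_less_iff)
qed

lemma fl_eq_iff:
  assumes "0 \<le> y"
  shows "fl k y = j \<longleftrightarrow> real j / 2^k \<le> y \<and> y < (real j + 1) / 2^k"
proof -
  have nn: "0 \<le> \<lfloor>2^k * y\<rfloor>" using assms by simp
  have "fl k y = j \<longleftrightarrow> \<lfloor>2^k * y\<rfloor> = int j" unfolding fl_def using nn by auto
  also have "\<dots> \<longleftrightarrow> real j \<le> 2^k * y \<and> 2^k * y < real j + 1" by (simp add: floor_eq_iff)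
  also have "\<dots> \<longleftrightarrow> real j / 2^k \<le> y \<and> y < (real j + 1) / 2^k"
    by (simp add: divide_le_eq less_divide_eq mult.commute)
  finally show ?thesis .
qed

lemma DK_single: "DK k {j} = Om \<inter> {real j / 2^k ..< (real j + 1) / 2^k}"
proof (intro set_eqI iffI)
  fix y assume "y \<in> DK k {j}"
  then have "y \<in> Om" "fl k y = j" by (auto simp: DK_def)
  then show "y \<in> Om \<inter> {real j / 2^k ..< (real j + 1) / 2^k}"
    using fl_eq_iff[of y k j] by (auto simp: Om_def)
next
  fix y assume y: "y \<in> Om \<inter> {real j / 2^k ..< (real j + 1) / 2^k}"
  then have "y \<in> Om" by blast
  then have "0 \<le> y" by (simp add: Om_def)
  then have "fl k y = j" using fl_eq_iff[of y k j] y by auto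
  then show "y \<in> DK k {j}" using y by (simp add: DK_def)
qed

lemma DK_UN: "DK k J = (\<Union>j\<in>J. DK k {j})"
  unfolding DK_def by auto

lemma DK_sets_lborel: "DK k J \<in> sets lborel"
proof -
  have "(\<Union>j\<in>J. DK k {j}) \<in> sets lborel"
    by (intro sets.countable_UN') (auto simp: DK_single Om_Ico_sets)
  then show ?thesis using DK_UN[of k J] by metis
qed

lemma DK_sub: "DK k J \<subseteq> Om" by (auto simp: DK_def)

lemma DK_sets: "DK k J \<in> sets LM"
  using DK_sets_lborel DK_sub by (simp add: sets_LM_iff)

lemma DK_measure: "measure LM (DK k {j}) \<le> 1 / 2^k"
proof -
  have "measure LM (DK k {j}) = measure lborel (DK k {j})" by (rule measure_LM[OF DK_sub])
  also have "\<dots> \<le> measure lborel {real j / 2^k ..< (real j + 1) / 2^k}"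
    by (rule measure_mono_fmeasurable) (auto simp: DK_single Om_Ico_sets intro!: Ico_fmeas divide_right_mono)
  also have "\<dots> = (real j + 1) / 2^k - real j / 2^k"
    by (rule measure_lborel_Ico) (simp add: divide_right_mono)
  also have "\<dots> = 1 / 2^k" by (simp add: diff_divide_distrib[symmetric])
  finally show ?thesis .
qed

lemma DK_compl: "Om - DK k J = DK k (- J)"
  unfolding DK_def by auto

lemma DK_Un: "DK k J \<union> DK k J' = DK k (J \<union> J')"
  unfolding DK_def by auto

lemma DK_lift: "DK k J = DK (k + d) {j. j div 2^d \<in> J}"
  unfolding DK_def using fl_div by (auto simp: Om_def)

lemma DK_Un2: "\<exists>J''. DK k J \<union> DK k' J' = DK (k + k') J''"
proof -
  have "DK k J = DK (k + k') {j. j div 2^k' \<in> J}" by (rule DK_lift)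
  moreover have "DK k' J' = DK (k + k') {j. j div 2^k \<in> J'}"
    using DK_lift[of k' J' k] by (simp add: add.commute)
  ultimately show ?thesis using DK_Un by metis
qed

lemma DK_bounded: "DK k J = DK k (J \<inter> {..<2^k})"
  unfolding DK_def using fl_less by auto

lemma Iv_sub: "Iv n \<subseteq> Om" unfolding Iv_def by (rule DK_sub)

lemma Iv_sets: "Iv n \<in> sets LM" unfolding Iv_def by (rule DK_sets)

lemma SD_sigma: "sigma_algebra Om SD"
  unfolding SD_def by (rule sigma_algebra_sigma_sets) (use Iv_sub in auto)

interpretation SDa: sigma_algebra Om SD by (rule SD_sigma)

lemma Iv_SD: "Iv n \<in> SD" unfolding SD_def by (rule sigma_sets.Basic) simp

lemma SD_sets: "SD \<subseteq> sets LM"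
proof -
  interpret LMs: sigma_algebra Om "sets LM"
    using sets.sigma_algebra_axioms[of LM] by (simp add: space_LM)
  show ?thesis unfolding SD_def by (rule LMs.sigma_sets_subset) (auto simp: Iv_sets)
qed

lemma UU_eq: "UU A = Om \<inter> (\<Inter>m. \<Union>n\<in>{n \<in> A. m \<le> n}. Iv n)"
  unfolding UU_def infinite_nat_iff_unbounded_le by auto

lemma UU_SD: "UU A \<in> SD"
proof -
  have "(\<Inter>m. \<Union>n\<in>{n \<in> A. m \<le> n}. Iv n) \<in> SD"
    by (intro SDa.countable_INT SDa.countable_UN') (auto simp: Iv_SD)
  then show ?thesis unfolding UU_eq using SDa.top SDa.Int by blast
qed

lemma UU_mono: "A \<subseteq> B \<Longrightarrow> UU A \<subseteq> UU B"
proof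
  fix y assume AB: "A \<subseteq> B" and y: "y \<in> UU A"
  have "{n \<in> A. y \<in> Iv n} \<subseteq> {n \<in> B. y \<in> Iv n}" using AB by blast
  then show "y \<in> UU B" using y finite_subset unfolding UU_def by blast
qed

lemma UU_Un: "UU (A \<union> B) \<subseteq> UU A \<union> UU B"
proof
  fix y assume "y \<in> UU (A \<union> B)"
  then have y: "y \<in> Om" "infinite {n \<in> A \<union> B. y \<in> Iv n}" by (auto simp: UU_def)
  have "{n \<in> A \<union> B. y \<in> Iv n} = {n \<in> A. y \<in> Iv n} \<union> {n \<in> B. y \<in> Iv n}" by auto
  then show "y \<in> UU A \<union> UU B" using y by (auto simp: UU_def)
qed

lemma UU_finite: "finite A \<Longrightarrow> UU A = {}"
  unfolding UU_def by auto

lemma UU_empty: "UU {} = {}" by (simp add: UU_finite)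

lemma UU_UNIV: "UU UNIV = Om"
proof -
  have "infinite {n. y \<in> Iv n}" if y: "y \<in> Om" for y
  proof -
    have "range (\<lambda>k. prod_encode (k, fl k y)) \<subseteq> {n. y \<in> Iv n}"
      using y by (auto simp: Iv_def lev_def idx_def DK_def)
    moreover have "infinite (range (\<lambda>k. prod_encode (k, fl k y)))"
      by (rule range_inj_infinite) (auto simp: inj_def prod_encode_eq)
    ultimately show ?thesis using infinite_super by blast
  qed
  then show ?thesis unfolding UU_def by auto
qed

definition covered :: "nat set \<Rightarrow> real set \<Rightarrow> bool" where
  "covered A G \<longleftrightarrow> (\<forall>n\<in>A. Iv n \<subseteq> G)"

lemma covered_UU: "covered A G \<Longrightarrow> UU A \<subseteq> G"
proof
  fix y assume c: "covered A G" and y: "y \<in> UU A"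
  then have "infinite {n \<in> A. y \<in> Iv n}" by (simp add: UU_def)
  then obtain n where "n \<in> A" "y \<in> Iv n" using not_finite_existsD by blast
  then show "y \<in> G" using c by (auto simp: covered_def)
qed

interpretation HS: hom_setup LM SD UU
proof (intro hom_setup.intro prob_LM hom_setup_axioms.intro)
  show "sigma_algebra (space LM) SD" by (simp add: space_LM SD_sigma)
  show "SD \<subseteq> sets LM" by (rule SD_sets)
qed (auto simp: UU_SD UU_mono UU_Un UU_empty UU_UNIV space_LM)

definition hh :: "nat set \<Rightarrow> real set" where
  "hh = (SOME h. \<forall>A B. h A \<in> SD \<and> (AE x in LM. x \<in> h A \<longrightarrow> x \<in> UU A) \<and>
          (AE x in LM. x \<in> h (- A) \<longleftrightarrow> x \<notin> h A) \<and>
          (AE x in LM. x \<in> h (A \<inter> B) \<longleftrightarrow> x \<in> h A \<and> x \<in> h B))"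

lemma hh_props: "hh A \<in> SD \<and> (AE x in LM. x \<in> hh A \<longrightarrow> x \<in> UU A) \<and>
          (AE x in LM. x \<in> hh (- A) \<longleftrightarrow> x \<notin> hh A) \<and>
          (AE x in LM. x \<in> hh (A \<inter> B) \<longleftrightarrow> x \<in> hh A \<and> x \<in> hh B)"
proof -
  have "\<forall>A B. hh A \<in> SD \<and> (AE x in LM. x \<in> hh A \<longrightarrow> x \<in> UU A) \<and>
          (AE x in LM. x \<in> hh (- A) \<longleftrightarrow> x \<notin> hh A) \<and>
          (AE x in LM. x \<in> hh (A \<inter> B) \<longleftrightarrow> x \<in> hh A \<and> x \<in> hh B)"
    unfolding hh_def by (rule someI_ex[OF HS.hom_exists])
  then show ?thesis by blast
qed

lemma hh_SD: "hh A \<in> SD" using hh_props by blast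
lemma hh_sets: "hh A \<in> sets LM" using hh_SD SD_sets by blast
lemma hh_U: "AE x in LM. x \<in> hh A \<longrightarrow> x \<in> UU A" using hh_props by blast
lemma hh_C: "AE x in LM. x \<in> hh (- A) \<longleftrightarrow> x \<notin> hh A" using hh_props by blast
lemma hh_I: "AE x in LM. x \<in> hh (A \<inter> B) \<longleftrightarrow> x \<in> hh A \<and> x \<in> hh B" using hh_props by blast

lemma hh_Un: "AE x in LM. x \<in> hh (A \<union> B) \<longleftrightarrow> x \<in> hh A \<or> x \<in> hh B"
proof -
  have e: "A \<union> B = - (- A \<inter> - B)" by auto
  show ?thesis using hh_C[of "- A \<inter> - B"] hh_I[of "- A" "- B"] hh_C[of A] hh_C[of B]
    unfolding e[symmetric] by eventually_elim auto
qed

lemma hh_null: "UU A = {} \<Longrightarrow> AE x in LM. x \<notin> hh A"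
  using hh_U[of A] by eventually_elim auto

lemma hh_Diff: "AE x in LM. x \<in> hh (A - B) \<longleftrightarrow> x \<in> hh A \<and> x \<notin> hh B"
proof -
  have e: "A - B = A \<inter> - B" by auto
  show ?thesis using hh_I[of A "- B"] hh_C[of B] unfolding e[symmetric] by eventually_elim auto
qed

lemma hh_UNIV: "AE x in LM. x \<in> hh UNIV"
  using hh_C[of UNIV] hh_null[OF UU_empty] by eventually_elim auto

definition mu :: "nat set \<Rightarrow> real" where "mu A = measure LM (hh A)"

lemma mu_nonneg: "0 \<le> mu A" by (simp add: mu_def)

lemma mu_UNIV: "mu UNIV = 1"
proof -
  have "measure LM (hh UNIV) = measure LM (space LM)"
    using hh_UNIV AE_space by (intro measure_eq_AE) (auto simp: hh_sets elim: eventually_mono)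
  then show ?thesis by (simp add: mu_def LMp.prob_space)
qed

lemma mu_add: "A \<inter> B = {} \<Longrightarrow> mu (A \<union> B) = mu A + mu B"
proof -
  assume d: "A \<inter> B = {}"
  have n: "AE x in LM. x \<notin> hh A \<or> x \<notin> hh B"
    using hh_I[of A B] hh_null[of "A \<inter> B"] d by (auto simp: UU_empty elim: eventually_elim2)
  have "measure LM (hh (A \<union> B)) = measure LM (hh A \<union> hh B)"
    using hh_Un[of A B] by (intro measure_eq_AE) (auto simp: hh_sets)
  also have "\<dots> = measure LM (hh A) + measure LM (hh B)"
    using n by (intro measure_Un_AE) (auto simp: LMp.fmeasurable_eq_sets hh_sets)
  finally show ?thesis by (simp add: mu_def)
qed

lemma mu_finite: "finite F \<Longrightarrow> mu F = 0"
proof -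
  assume "finite F"
  then have "AE x in LM. x \<notin> hh F" using hh_null UU_finite by blast
  then have "measure LM (hh F) \<le> measure LM {}"
    by (intro LMp.finite_measure_mono_AE) (auto elim: eventually_mono)
  then show ?thesis by (simp add: mu_def measure_le_0_iff)
qed

lemma mu_le_U: "mu A \<le> measure LM (UU A)"
  unfolding mu_def using hh_U UU_SD SD_sets by (intro LMp.finite_measure_mono_AE) auto

definition Zs :: "nat set" where "Zs = {n. 2 ^ lev n \<le> idx n}"
definition Fk :: "nat \<Rightarrow> nat set" where "Fk k = {n. lev n < k \<and> idx n < 2 ^ lev n}"
definition Ek :: "nat \<Rightarrow> nat \<Rightarrow> nat set" where
  "Ek k j = {n. k \<le> lev n \<and> idx n < 2 ^ lev n \<and> idx n div 2 ^ (lev n - k) = j}"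

lemma covered_Zs: "covered Zs {}"
  unfolding covered_def
proof (intro ballI subsetI)
  fix n y assume n: "n \<in> Zs" and y: "y \<in> Iv n"
  then have "y \<in> Om" "fl (lev n) y = idx n" by (auto simp: Iv_def DK_def)
  then have "idx n < 2 ^ lev n" using fl_less by metis
  then show "y \<in> {}" using n by (simp add: Zs_def)
qed

lemma finite_Fk: "finite (Fk k)"
proof -
  have "Fk k \<subseteq> prod_encode ` ({..<k} \<times> {..<2^k})"
  proof
    fix n assume n: "n \<in> Fk k"
    then have "lev n < k" "idx n < 2 ^ lev n" by (auto simp: Fk_def)
    moreover have "(2::nat) ^ lev n < 2 ^ k" using \<open>lev n < k\<close> by (rule power_strict_increasing) simp
    ultimately have "idx n < 2 ^ k" by linarith
    moreover have "n = prod_encode (lev n, idx n)" by (simp add: lev_def idx_def)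
    ultimately show "n \<in> prod_encode ` ({..<k} \<times> {..<2^k})" using \<open>lev n < k\<close> by blast
  qed
  then show ?thesis by (rule finite_subset) simp
qed

lemma covered_Ek: "covered (Ek k j) (DK k {j})"
  unfolding covered_def
proof (intro ballI subsetI)
  fix n y assume n: "n \<in> Ek k j" and y: "y \<in> Iv n"
  then have y': "y \<in> Om" "fl (lev n) y = idx n" by (auto simp: Iv_def DK_def)
  have "fl k y = fl (lev n) y div 2 ^ (lev n - k)"
    using n y'(1) by (intro fl_div') (auto simp: Ek_def Om_def)
  then show "y \<in> DK k {j}" using n y' by (auto simp: Ek_def DK_def)
qed

lemma decomp: "UNIV = Fk k \<union> Zs \<union> (\<Union>j<2^k. Ek k j)"
proof -
  have "n \<in> Fk k \<union> Zs \<union> (\<Union>j<2^k. Ek k j)" for n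
  proof (cases "2 ^ lev n \<le> idx n")
    case True then show ?thesis by (simp add: Zs_def)
  next
    case False
    then have il: "idx n < 2 ^ lev n" by simp
    show ?thesis
    proof (cases "lev n < k")
      case True then show ?thesis using il by (simp add: Fk_def)
    next
      case False
      then have kl: "k \<le> lev n" by simp
      have "idx n div 2 ^ (lev n - k) < 2 ^ k"
      proof -
        have "2 ^ lev n = 2 ^ k * (2::nat) ^ (lev n - k)" using kl by (simp flip: power_add)
        then show ?thesis using il by (simp add: div_less_iff_less_mult mult.commute)
      qed
      then show ?thesis using il kl by (auto simp: Ek_def)
    qed
  qed
  then show ?thesis by blast
qed

lemma uf_small_piece:
  assumes p: "p \<in> beta_omega - omega_in_beta"
  shows "\<exists>A G. A \<in> p \<and> covered A G \<and> G \<in> sets LM \<and> measure LM G \<le> 1 / 2^k"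
proof -
  have u: "ultrafilter_nat p" and np: "p \<notin> omega_in_beta" using p by (auto simp: beta_omega_def)
  have "- Fk k \<in> p" using nonprincipal_cofinite[OF u np finite_Fk] .
  moreover have "- Fk k \<subseteq> \<Union>(insert Zs (Ek k ` {..<2^k}))"
  proof
    fix n assume "n \<in> - Fk k"
    moreover have "n \<in> Fk k \<union> Zs \<union> (\<Union>j<2^k. Ek k j)" using decomp[of k] by blast
    ultimately show "n \<in> \<Union>(insert Zs (Ek k ` {..<2^k}))" by auto
  qed
  ultimately have un: "\<Union>(insert Zs (Ek k ` {..<2^k})) \<in> p" by (rule uf_mono[OF u])
  have fin: "finite (insert Zs (Ek k ` {..<2^k}))" by simp
  obtain B where B: "B \<in> insert Zs (Ek k ` {..<2^k})" "B \<in> p"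
    using uf_Union_finite[OF u fin un] by blast
  show ?thesis
  proof (cases "B = Zs")
    case True
    then show ?thesis using B covered_Zs by (intro exI[of _ B] exI[of _ "{}"]) auto
  next
    case False
    then obtain j where "B = Ek k j" using B by blast
    then show ?thesis using B covered_Ek DK_sets DK_measure
      by (intro exI[of _ B] exI[of _ "DK k {j}"]) auto
  qed
qed

lemma mu_small:
  fixes p :: "nat \<Rightarrow> nat set set"
  assumes p: "\<And>n. p n \<in> beta_omega - omega_in_beta" and e: "0 < e"
  shows "\<exists>A. (\<forall>n. A \<in> p n) \<and> mu A < e"
proof -
  obtain m where m: "(1/2::real) ^ m < e / 2" using real_arch_pow_inv[of "e/2" "1/2"] e by auto
  have "\<forall>n. \<exists>A G. A \<in> p n \<and> covered A G \<and> G \<in> sets LM \<and> measure LM G \<le> 1 / 2^(n + m)"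
    using uf_small_piece[OF p] by blast
  then obtain A G where AG: "\<And>n. A n \<in> p n" "\<And>n. covered (A n) (G n)" "\<And>n. G n \<in> sets LM"
    "\<And>n. measure LM (G n) \<le> 1 / 2^(n + m)" by metis
  define AA where "AA = (\<Union>n. A n)"
  have "AA \<in> p n" for n
  proof -
    have u: "ultrafilter_nat (p n)" using p[of n] by (auto simp: beta_omega_def)
    show ?thesis unfolding AA_def by (rule uf_mono[OF u AG(1)[of n]]) blast
  qed
  moreover have "mu AA < e"
  proof -
    have cov: "covered AA (\<Union>n. G n)" using AG(2) unfolding covered_def AA_def by blast
    have geo: "(\<lambda>n. (1/2::real)^m * (1/2)^n) sums ((1/2)^m * 2)"
      by (intro sums_mult) (simp add: geometric_sums[of "1/2::real", simplified])
    have eq: "(1::real) / 2^(n+m) = (1/2)^m * (1/2)^n" for n by (simp add: power_add power_one_over)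
    have gs: "summable (\<lambda>n. (1/2::real)^m * (1/2)^n)" using geo by (rule sums_summable)
    have bnd: "measure LM (G n) \<le> (1/2::real)^m * (1/2)^n" for n
      using AG(4)[of n] eq[of n] by simp
    have summ: "summable (\<lambda>n. measure LM (G n))"
      by (rule summable_comparison_test'[OF gs, of 0]) (use bnd in simp)
    have "mu AA \<le> measure LM (UU AA)" by (rule mu_le_U)
    also have "\<dots> \<le> measure LM (\<Union>n. G n)"
      using covered_UU[OF cov] AG(3) by (intro LMp.finite_measure_mono) auto
    also have "\<dots> \<le> (\<Sum>n. measure LM (G n))"
      using AG(3) summ by (intro LMp.finite_measure_subadditive_countably) auto
    also have "\<dots> \<le> (\<Sum>n. (1/2::real)^m * (1/2)^n)"
      by (rule suminf_le[OF bnd summ gs])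
    also have "\<dots> = (1/2)^m * 2" using geo by (simp add: sums_iff)
    finally show ?thesis using m by linarith
  qed
  ultimately show ?thesis by blast
qed



section \<open>Approximation by dyadic sets and the finitely additive measure mu\<close>

definition sd :: "'a set \<Rightarrow> 'a set \<Rightarrow> 'a set" where "sd X Y = (X - Y) \<union> (Y - X)"

definition approx :: "real set \<Rightarrow> bool" where
  "approx S \<longleftrightarrow> (\<forall>e>0. \<exists>k J. measure LM (sd S (DK k J)) < e)"

lemma sd_sets: "S \<in> sets LM \<Longrightarrow> T \<in> sets LM \<Longrightarrow> sd S T \<in> sets LM"
  unfolding sd_def by auto

lemma approx_empty: "approx {}"
  unfolding approx_def
proof (intro allI impI)
  fix e :: real assume "0 < e"
  have "DK 0 {} = {}" by (simp add: DK_def)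
  then have "measure LM (sd {} (DK 0 {})) = 0" by (simp add: sd_def)
  then show "\<exists>k J. measure LM (sd {} (DK k J)) < e" using \<open>0 < e\<close> by metis
qed

lemma approx_Un:
  assumes S: "S \<in> sets LM" "S' \<in> sets LM" and a: "approx S" "approx S'"
  shows "approx (S \<union> S')"
  unfolding approx_def
proof (intro allI impI)
  fix e :: real assume e: "0 < e"
  obtain k J where kJ: "measure LM (sd S (DK k J)) < e / 2" using a(1) e unfolding approx_def by (meson half_gt_zero)
  obtain k' J' where kJ': "measure LM (sd S' (DK k' J')) < e / 2" using a(2) e unfolding approx_def by (meson half_gt_zero)
  obtain J'' where J'': "DK k J \<union> DK k' J' = DK (k + k') J''" using DK_Un2 by blast
  have sub: "sd (S \<union> S') (DK (k + k') J'') \<subseteq> sd S (DK k J) \<union> sd S' (DK k' J')"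
    unfolding J''[symmetric] sd_def by blast
  have "measure LM (sd (S \<union> S') (DK (k + k') J'')) \<le> measure LM (sd S (DK k J) \<union> sd S' (DK k' J'))"
    using sub S by (intro LMp.finite_measure_mono) (auto intro!: sd_sets DK_sets)
  also have "\<dots> \<le> measure LM (sd S (DK k J)) + measure LM (sd S' (DK k' J'))"
    using S by (intro measure_subadditive) (auto intro!: sd_sets DK_sets simp: LMp.emeasure_finite)
  finally have "measure LM (sd (S \<union> S') (DK (k + k') J'')) < e" using kJ kJ' by linarith
  then show "\<exists>k J. measure LM (sd (S \<union> S') (DK k J)) < e" by blast
qed

lemma approx_fin:
  fixes a :: "nat \<Rightarrow> real set" and N :: nat
  assumes "\<And>i. a i \<in> sets LM" "\<And>i. approx (a i)"
  shows "approx (\<Union>i<N. a i)"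
proof (induction N)
  case 0
  then show ?case by (simp add: approx_empty)
next
  case (Suc N)
  have e: "(\<Union>i<Suc N. a i) = a N \<union> (\<Union>i<N. a i)" by (simp add: lessThan_Suc)
  show ?case unfolding e by (rule approx_Un) (use assms Suc in auto)
qed

lemma approx_SD: "S \<in> SD \<Longrightarrow> approx S"
  unfolding SD_def
proof (induction rule: sigma_sets.induct)
  case (Basic a)
  then obtain n where a: "a = Iv n" by blast
  show ?case unfolding approx_def a
  proof (intro allI impI)
    fix e :: real assume "0 < e"
    have "measure LM (sd (Iv n) (DK (lev n) {idx n})) = 0" by (simp add: sd_def Iv_def)
    then show "\<exists>k J. measure LM (sd (Iv n) (DK k J)) < e" using \<open>0 < e\<close> by metis
  qed
next
  case Empty
  then show ?case by (rule approx_empty)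
next
  case (Compl a)
  have asub: "a \<subseteq> Om" using Compl.hyps SDa.sets_into_space unfolding SD_def by blast
  show ?case unfolding approx_def
  proof (intro allI impI)
    fix e :: real assume "0 < e"
    then obtain k J where kJ: "measure LM (sd a (DK k J)) < e" using Compl.IH unfolding approx_def by blast
    have "sd (Om - a) (DK k (- J)) = sd a (DK k J)"
      unfolding sd_def DK_compl[symmetric] using asub DK_sub[of k J] by blast
    then show "\<exists>k J. measure LM (sd (Om - a) (DK k J)) < e" using kJ by metis
  qed
next
  case (Union a)
  have as: "\<And>i. a i \<in> sets LM" using Union.hyps SD_sets unfolding SD_def by blast
  define P where "P N = (\<Union>i<N. a i)" for N
  have Ps: "P N \<in> sets LM" for N unfolding P_def using as by auto
  have inc: "incseq P" unfolding P_def by (intro monoI UN_mono) auto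
  have UP: "(\<Union>N. P N) = (\<Union>i. a i)" unfolding P_def by auto
  have lim: "(\<lambda>N. measure LM (P N)) \<longlonglongrightarrow> measure LM (\<Union>i. a i)"
    using LMp.finite_Lim_measure_incseq[of P] Ps inc UP by auto
  show ?case unfolding approx_def
  proof (intro allI impI)
    fix e :: real assume e: "0 < e"
    obtain N where N: "norm (measure LM (P N) - measure LM (\<Union>i. a i)) < e / 2"
      using LIMSEQ_D[OF lim, of "e/2"] e by auto
    have PU: "P N \<subseteq> (\<Union>i. a i)" unfolding P_def by auto
    have Us: "(\<Union>i. a i) \<in> sets LM" using as by auto
    have d: "measure LM ((\<Union>i. a i) - P N) < e / 2"
      using LMp.finite_measure_Diff[OF Us Ps PU] N by (simp add: abs_if split: if_splits)
    have "approx (P N)" unfolding P_def by (rule approx_fin) (use as Union.IH in auto)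
    then obtain k J where kJ: "measure LM (sd (P N) (DK k J)) < e / 2"
      using e unfolding approx_def by (meson half_gt_zero)
    have sub: "sd (\<Union>i. a i) (DK k J) \<subseteq> ((\<Union>i. a i) - P N) \<union> sd (P N) (DK k J)"
      unfolding sd_def using PU by blast
    have "measure LM (sd (\<Union>i. a i) (DK k J)) \<le> measure LM (((\<Union>i. a i) - P N) \<union> sd (P N) (DK k J))"
      using sub Us Ps by (intro LMp.finite_measure_mono) (auto intro!: sd_sets DK_sets)
    also have "\<dots> \<le> measure LM ((\<Union>i. a i) - P N) + measure LM (sd (P N) (DK k J))"
      using Us Ps by (intro measure_subadditive) (auto intro!: sd_sets DK_sets simp: LMp.emeasure_finite)
    finally have "measure LM (sd (\<Union>i. a i) (DK k J)) < e" using d kJ by linarith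
    then show "\<exists>k J. measure LM (sd (\<Union>i. a i) (DK k J)) < e" by blast
  qed
qed

definition EU :: "nat \<Rightarrow> nat set \<Rightarrow> nat set" where "EU k J = (\<Union>j\<in>J. Ek k j)"

lemma hh_EU:
  "AE x in LM. x \<in> hh (EU k (J \<inter> {..<2^k})) \<longleftrightarrow> x \<in> DK k J"
proof -
  define J0 where "J0 = J \<inter> {..<2^k}"
  define J1 where "J1 = {..<2^k} - J0"
  have c0: "covered (EU k J0) (DK k J0)"
    unfolding covered_def EU_def
  proof (intro ballI)
    fix n assume "n \<in> (\<Union>j\<in>J0. Ek k j)"
    then obtain j where j: "j \<in> J0" "n \<in> Ek k j" by blast
    then have "Iv n \<subseteq> DK k {j}" using covered_Ek[of k j] by (auto simp: covered_def)
    also have "\<dots> \<subseteq> DK k J0" using j by (auto simp: DK_def)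
    finally show "Iv n \<subseteq> DK k J0" .
  qed
  have u0: "UU (EU k J0) \<subseteq> DK k J" using covered_UU[OF c0] DK_bounded[of k J] by (simp add: J0_def)
  have csub: "- EU k J0 \<subseteq> Fk k \<union> Zs \<union> EU k J1"
  proof
    fix n assume n: "n \<in> - EU k J0"
    have "n \<in> Fk k \<union> Zs \<union> (\<Union>j<2^k. Ek k j)" using decomp[of k] by blast
    then show "n \<in> Fk k \<union> Zs \<union> EU k J1" using n unfolding EU_def J1_def by blast
  qed
  have c1: "covered (EU k J1) (DK k J1)"
    unfolding covered_def EU_def
  proof (intro ballI)
    fix n assume "n \<in> (\<Union>j\<in>J1. Ek k j)"
    then obtain j where j: "j \<in> J1" "n \<in> Ek k j" by blast
    then have "Iv n \<subseteq> DK k {j}" using covered_Ek[of k j] by (auto simp: covered_def)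
    also have "\<dots> \<subseteq> DK k J1" using j by (auto simp: DK_def)
    finally show "Iv n \<subseteq> DK k J1" .
  qed
  have "UU (- EU k J0) \<subseteq> UU (Fk k \<union> Zs \<union> EU k J1)" by (rule UU_mono[OF csub])
  also have "\<dots> \<subseteq> UU (Fk k) \<union> UU Zs \<union> UU (EU k J1)" using UU_Un by blast
  also have "\<dots> \<subseteq> DK k J1"
    using UU_finite[OF finite_Fk] covered_UU[OF covered_Zs] covered_UU[OF c1] by blast
  finally have u1: "UU (- EU k J0) \<subseteq> DK k J1" .
  have disj: "DK k J1 \<inter> DK k J = {}"
  proof -
    have "fl k y \<in> J0" if "y \<in> DK k J" for y using that fl_less by (auto simp: DK_def J0_def)
    then show ?thesis unfolding J1_def DK_def by auto
  qed
  show ?thesis unfolding J0_def[symmetric]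
    using hh_U[of "EU k J0"] hh_U[of "- EU k J0"] hh_C[of "EU k J0"]
  proof eventually_elim
    case (elim x)
    then show ?case using u0 u1 disj by blast
  qed
qed

lemma countable_EU: "countable ((\<lambda>(k, J). EU k J) ` (UNIV \<times> {J. finite J}))"
  by (intro countable_image countable_SIGMA) (auto simp: countable_Collect_finite)

lemma mu_approx:
  assumes e: "0 < e"
  shows "\<exists>C\<in>(\<lambda>(k, J). EU k J) ` (UNIV \<times> {J. finite J}). mu (A - C) + mu (C - A) < e"
proof -
  obtain k J where kJ: "measure LM (sd (hh A) (DK k J)) < e"
    using approx_SD[OF hh_SD[of A]] e unfolding approx_def by blast
  define C where "C = EU k (J \<inter> {..<2^k})"
  have CC: "C \<in> (\<lambda>(k, J). EU k J) ` (UNIV \<times> {J. finite J})" unfolding C_def by auto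
  have hC: "AE x in LM. x \<in> hh C \<longleftrightarrow> x \<in> DK k J" unfolding C_def by (rule hh_EU)
  have m1: "mu (A - C) = measure LM (hh A - DK k J)"
    unfolding mu_def using hh_Diff[of A C] hC
    by (intro measure_eq_AE) (auto simp: hh_sets DK_sets elim: eventually_elim2)
  have m2: "mu (C - A) = measure LM (DK k J - hh A)"
    unfolding mu_def using hh_Diff[of C A] hC
    by (intro measure_eq_AE) (auto simp: hh_sets DK_sets elim: eventually_elim2)
  have "measure LM (sd (hh A) (DK k J)) = measure LM (hh A - DK k J) + measure LM (DK k J - hh A)"
    unfolding sd_def by (intro measure_Un_AE) (auto simp: LMp.fmeasurable_eq_sets hh_sets DK_sets)
  then have "mu (A - C) + mu (C - A) < e" using kJ m1 m2 by linarith
  then show ?thesis using CC by blast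
qed

theorem mu_exists:
  "\<exists>\<mu>::nat set \<Rightarrow> real. (\<forall>A. 0 \<le> \<mu> A) \<and> \<mu> UNIV = 1 \<and>
     (\<forall>A B. A \<inter> B = {} \<longrightarrow> \<mu> (A \<union> B) = \<mu> A + \<mu> B) \<and>
     (\<forall>F. finite F \<longrightarrow> \<mu> F = 0) \<and>
     (\<forall>p::nat \<Rightarrow> nat set set. (\<forall>n. p n \<in> beta_omega - omega_in_beta) \<longrightarrow>
          (\<forall>e>0. \<exists>A. (\<forall>n. A \<in> p n) \<and> \<mu> A < e)) \<and>
     (\<exists>\<C>. countable \<C> \<and> (\<forall>A e. 0 < e \<longrightarrow> (\<exists>C\<in>\<C>. \<mu> (A - C) + \<mu> (C - A) < e)))"
proof (intro exI[of _ mu] conjI allI impI)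
  show "\<exists>\<C>. countable \<C> \<and> (\<forall>A e. 0 < e \<longrightarrow> (\<exists>C\<in>\<C>. mu (A - C) + mu (C - A) < e))"
    using countable_EU mu_approx by blast
qed (auto simp: mu_nonneg mu_UNIV mu_add mu_finite intro: mu_small)



section \<open>From a finitely additive measure on P(omega) to a Radon measure on beta omega\<close>

locale mu_setup =
  fixes \<mu> :: "nat set \<Rightarrow> real"
  assumes mu_nn: "0 \<le> \<mu> A" and mu_one: "\<mu> UNIV = 1"
    and mu_addi: "A \<inter> B = {} \<Longrightarrow> \<mu> (A \<union> B) = \<mu> A + \<mu> B"
begin

lemma mu_empty: "\<mu> {} = 0"
  using mu_addi[of "{}" "{}"] by simp

lemma mu_mono: "A \<subseteq> B \<Longrightarrow> \<mu> A \<le> \<mu> B"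
proof -
  assume "A \<subseteq> B"
  then have "B = A \<union> (B - A)" by auto
  then have "\<mu> B = \<mu> A + \<mu> (B - A)" using mu_addi[of A "B - A"] by auto
  then show ?thesis using mu_nn[of "B - A"] by simp
qed

lemma mu_le1: "\<mu> A \<le> 1"
  using mu_mono[of A UNIV] mu_one by simp

lemma mu_Un_le: "\<mu> (A \<union> B) \<le> \<mu> A + \<mu> B"
proof -
  have "A \<union> B = A \<union> (B - A)" by auto
  then have "\<mu> (A \<union> B) = \<mu> A + \<mu> (B - A)" using mu_addi[of A "B - A"] by auto
  then show ?thesis using mu_mono[of "B - A" B] by simp
qed

lemma mu_UN_le: "finite I \<Longrightarrow> \<mu> (\<Union>i\<in>I. B i) \<le> (\<Sum>i\<in>I. \<mu> (B i))"
proof (induction I rule: finite_induct)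
  case empty
  then show ?case by (simp add: mu_empty)
next
  case (insert x F)
  have "\<mu> (\<Union>i\<in>insert x F. B i) = \<mu> (B x \<union> (\<Union>i\<in>F. B i))" by simp
  also have "\<dots> \<le> \<mu> (B x) + \<mu> (\<Union>i\<in>F. B i)" by (rule mu_Un_le)
  also have "\<dots> \<le> \<mu> (B x) + (\<Sum>i\<in>F. \<mu> (B i))" using insert by simp
  finally show ?case using insert by simp
qed

definition nuO :: "nat set set set \<Rightarrow> ennreal" where
  "nuO W = (SUP A\<in>{A. bs A \<subseteq> W}. ennreal (\<mu> A))"

definition nus :: "nat set set set \<Rightarrow> ennreal" where
  "nus S = (INF W\<in>{W. openin BT W \<and> S \<subseteq> W}. nuO W)"

lemma nuO_mono: "W \<subseteq> W' \<Longrightarrow> nuO W \<le> nuO W'"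
  unfolding nuO_def by (rule SUP_subset_mono) auto

lemma nuO_bs: "nuO (bs A) = ennreal (\<mu> A)"
  unfolding nuO_def
proof (rule antisym)
  show "(SUP B\<in>{B. bs B \<subseteq> bs A}. ennreal (\<mu> B)) \<le> ennreal (\<mu> A)"
    by (rule SUP_least) (auto simp: bs_subset_iff intro!: ennreal_leI mu_mono)
  show "ennreal (\<mu> A) \<le> (SUP B\<in>{B. bs B \<subseteq> bs A}. ennreal (\<mu> B))"
    by (rule SUP_upper2[of A]) auto
qed

lemma nuO_le1: "nuO W \<le> 1"
  unfolding nuO_def by (rule SUP_least) (simp add: mu_le1)

lemma nus_le: "openin BT W \<Longrightarrow> S \<subseteq> W \<Longrightarrow> nus S \<le> nuO W"
  unfolding nus_def by (rule INF_lower) auto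

lemma nus_open: "openin BT W \<Longrightarrow> nus W = nuO W"
proof -
  assume W: "openin BT W"
  show ?thesis
  proof (rule antisym)
    show "nus W \<le> nuO W" using nus_le[OF W] by simp
    show "nuO W \<le> nus W" unfolding nus_def by (rule INF_greatest) (auto intro: nuO_mono)
  qed
qed

lemma nus_bs: "nus (bs A) = ennreal (\<mu> A)"
  using nus_open[OF openin_bs] nuO_bs by simp

lemma nus_mono: "S \<subseteq> T \<Longrightarrow> nus S \<le> nus T"
  unfolding nus_def by (rule INF_superset_mono) auto

lemma open_X: "openin BT beta_omega"
  using openin_topspace[of BT] by (simp add: topspace_BT)

lemma nus_le1: "S \<subseteq> beta_omega \<Longrightarrow> nus S \<le> 1"
proof -
  assume "S \<subseteq> beta_omega"
  then have "nus S \<le> nuO beta_omega" by (rule nus_le[OF open_X])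
  then show ?thesis using nuO_le1[of beta_omega] by (rule order_trans)
qed

lemma nus_empty: "nus {} = 0"
proof -
  have "nus {} \<le> nuO {}" using nus_le[of "{}" "{}"] by simp
  also have "nuO {} = ennreal (\<mu> {})" using nuO_bs[of "{}"] by (simp add: bs_empty)
  finally show ?thesis by (simp add: mu_empty)
qed

lemma approx_open:
  assumes S: "S \<subseteq> beta_omega" and e: "0 < e"
  shows "\<exists>W. openin BT W \<and> S \<subseteq> W \<and> nuO W < nus S + ennreal e"
proof -
  have "nus S \<noteq> \<top>" using nus_le1[OF S] by (metis ennreal_one_less_top leD)
  then have "nus S < nus S + ennreal e"
    using ennreal_add_left_cancel_less[of "nus S" 0 "ennreal e"] e by simp
  then show ?thesis unfolding nus_def[of S] INF_less_iff by auto
qed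

lemma nuO_UN:
  assumes W: "\<And>i. openin BT (W i)"
  shows "nuO (\<Union>i. W i) \<le> (\<Sum>i. nuO (W i))"
  unfolding nuO_def[of "\<Union>i. W i"]
proof (rule SUP_least)
  fix A assume "A \<in> {A. bs A \<subseteq> (\<Union>i. W i)}"
  then have A: "bs A \<subseteq> (\<Union>i. W i)" by simp
  define \<U> where "\<U> = {bs C | C. \<exists>i. bs C \<subseteq> W i}"
  have "\<forall>V\<in>\<U>. openin BT V" unfolding \<U>_def using openin_bs by blast
  moreover have "bs A \<subseteq> \<Union>\<U>"
  proof
    fix U assume "U \<in> bs A"
    then obtain i where "U \<in> W i" using A by blast
    then obtain C where "U \<in> bs C" "bs C \<subseteq> W i" using W[of i] unfolding openin_BT by blast
    then show "U \<in> \<Union>\<U>" unfolding \<U>_def by blast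
  qed
  moreover have "compactin BT (bs A)" by (rule closed_compact[OF closedin_bs])
  ultimately obtain \<F> where F: "finite \<F>" "\<F> \<subseteq> \<U>" "bs A \<subseteq> \<Union>\<F>"
    unfolding compactin_def by meson
  have "\<forall>F\<in>\<F>. \<exists>p. F = bs (snd p) \<and> bs (snd p) \<subseteq> W (fst p)"
    using F(2) unfolding \<U>_def by force
  then obtain p where p: "\<And>F. F \<in> \<F> \<Longrightarrow> F = bs (snd (p F)) \<and> bs (snd (p F)) \<subseteq> W (fst (p F))"
    by metis
  define I where "I = (\<lambda>F. fst (p F)) ` \<F>"
  define B where "B i = (\<Union>F\<in>{F\<in>\<F>. fst (p F) = i}. snd (p F))" for i
  have fI: "finite I" unfolding I_def using F(1) by simp
  have Bsub: "bs (B i) \<subseteq> W i" for i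
  proof -
    have "bs (B i) = (\<Union>F\<in>{F\<in>\<F>. fst (p F) = i}. bs (snd (p F)))"
      unfolding B_def using bs_Union_finite[of "snd ` p ` {F\<in>\<F>. fst (p F) = i}"] F(1)
      by (simp add: image_image)
    also have "\<dots> \<subseteq> W i" using p by blast
    finally show ?thesis .
  qed
  have AB: "A \<subseteq> (\<Union>i\<in>I. B i)"
  proof -
    have "bs A \<subseteq> (\<Union>i\<in>I. bs (B i))"
    proof
      fix U assume "U \<in> bs A"
      then obtain F where "F \<in> \<F>" "U \<in> F" using F(3) by blast
      then have "U \<in> bs (snd (p F))" using p by metis
      moreover have "bs (snd (p F)) \<subseteq> bs (B (fst (p F)))"
        unfolding B_def bs_subset_iff using \<open>F \<in> \<F>\<close> by blast
      moreover have "fst (p F) \<in> I" unfolding I_def using \<open>F \<in> \<F>\<close> by blast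
      ultimately show "U \<in> (\<Union>i\<in>I. bs (B i))" by blast
    qed
    also have "\<dots> = bs (\<Union>i\<in>I. B i)"
      using bs_Union_finite[of "B ` I"] fI by (simp add: image_image)
    finally show ?thesis by (simp add: bs_subset_iff)
  qed
  have "\<mu> A \<le> \<mu> (\<Union>i\<in>I. B i)" by (rule mu_mono[OF AB])
  also have "\<dots> \<le> (\<Sum>i\<in>I. \<mu> (B i))" by (rule mu_UN_le[OF fI])
  finally have "ennreal (\<mu> A) \<le> ennreal (\<Sum>i\<in>I. \<mu> (B i))" by (rule ennreal_leI)
  also have "\<dots> = (\<Sum>i\<in>I. ennreal (\<mu> (B i)))" by (simp add: mu_nn sum_nonneg)
  also have "\<dots> \<le> (\<Sum>i\<in>I. nuO (W i))"
  proof (rule sum_mono)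
    fix i show "ennreal (\<mu> (B i)) \<le> nuO (W i)"
      unfolding nuO_def by (rule SUP_upper2[of "B i"]) (use Bsub in auto)
  qed
  also have "\<dots> \<le> (\<Sum>i. nuO (W i))" by (rule sum_le_suminf[OF summableI fI]) auto
  finally show "ennreal (\<mu> A) \<le> (\<Sum>i. nuO (W i))" .
qed

lemma nus_countable:
  assumes S: "\<And>i. S i \<subseteq> beta_omega"
  shows "nus (\<Union>i. S i) \<le> (\<Sum>i. nus (S i))"
proof (rule ennreal_le_epsilon)
  fix e :: real assume e: "0 < e"
  define ee where "ee i = e / 2 * (1/2)^i" for i
  have ee_pos: "0 < ee i" for i using e by (simp add: ee_def)
  have "\<forall>i. \<exists>W. openin BT W \<and> S i \<subseteq> W \<and> nuO W < nus (S i) + ennreal (ee i)"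
    using approx_open[OF S ee_pos] by blast
  then obtain W where W: "\<And>i. openin BT (W i)" "\<And>i. S i \<subseteq> W i"
    "\<And>i. nuO (W i) < nus (S i) + ennreal (ee i)" by metis
  have Wo: "openin BT (\<Union>i. W i)" using W(1) by blast
  have ees: "ee sums e"
  proof -
    have "(\<lambda>i. e / 2 * (1/2::real)^i) sums (e / 2 * 2)"
      by (intro sums_mult) (simp add: geometric_sums[of "1/2::real", simplified])
    then show ?thesis unfolding ee_def by simp
  qed
  have "nus (\<Union>i. S i) \<le> nuO (\<Union>i. W i)" by (rule nus_le[OF Wo]) (use W(2) in blast)
  also have "\<dots> \<le> (\<Sum>i. nuO (W i))" by (rule nuO_UN[OF W(1)])
  also have "\<dots> \<le> (\<Sum>i. nus (S i) + ennreal (ee i))"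
    by (intro suminf_le summableI less_imp_le W(3))
  also have "\<dots> = (\<Sum>i. nus (S i)) + (\<Sum>i. ennreal (ee i))"
    by (rule suminf_add[symmetric]) (auto intro: summableI)
  also have "\<dots> = (\<Sum>i. nus (S i)) + ennreal e"
  proof -
    have "(\<Sum>i. ennreal (ee i)) = ennreal (\<Sum>i. ee i)"
      by (rule suminf_ennreal2) (use ee_pos ees in \<open>auto intro: less_imp_le sums_summable\<close>)
    also have "(\<Sum>i. ee i) = e" using ees by (rule sums_unique[symmetric])
    finally show ?thesis by simp
  qed
  finally show "nus (\<Union>i. S i) \<le> (\<Sum>i. nus (S i)) + ennreal e" .
qed

lemma nus_sub2:
  assumes "S \<subseteq> beta_omega" "T \<subseteq> beta_omega"
  shows "nus (S \<union> T) \<le> nus S + nus T"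
proof -
  define SS where "SS i = (if i = 0 then S else if i = Suc 0 then T else {})" for i :: nat
  have U: "(\<Union>i. SS i) = S \<union> T"
  proof
    show "(\<Union>i. SS i) \<subseteq> S \<union> T" unfolding SS_def by auto
    show "S \<union> T \<subseteq> (\<Union>i. SS i)"
    proof -
      have "SS 0 = S" "SS (Suc 0) = T" by (simp_all add: SS_def)
      then show ?thesis by (metis UN_upper Un_least iso_tuple_UNIV_I)
    qed
  qed
  have "(\<Sum>i. nus (SS i)) = (\<Sum>i\<in>{0, Suc 0}. nus (SS i))"
    by (rule suminf_finite) (auto simp: SS_def nus_empty)
  also have "\<dots> = nus S + nus T" by (simp add: SS_def)
  finally have s: "(\<Sum>i. nus (SS i)) = nus S + nus T" .
  have "nus (\<Union>i. SS i) \<le> (\<Sum>i. nus (SS i))"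
    by (rule nus_countable) (use assms in \<open>auto simp: SS_def\<close>)
  then show ?thesis using U s by simp
qed

lemma open_lambda:
  assumes W: "openin BT W"
  shows "W \<in> lambda_system beta_omega (Pow beta_omega) nus"
  unfolding lambda_system_def
proof (intro CollectI conjI ballI)
  show "W \<in> Pow beta_omega" using W openin_subset topspace_BT by fastforce
  fix x assume x: "x \<in> Pow beta_omega"
  show "nus (W \<inter> x) + nus ((beta_omega - W) \<inter> x) = nus x"
  proof (rule antisym)
    have "x = (W \<inter> x) \<union> ((beta_omega - W) \<inter> x)" using x by auto
    then show "nus x \<le> nus (W \<inter> x) + nus ((beta_omega - W) \<inter> x)"
      using nus_sub2[of "W \<inter> x" "(beta_omega - W) \<inter> x"] x by auto
  next
    show "nus (W \<inter> x) + nus ((beta_omega - W) \<inter> x) \<le> nus x"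
      unfolding nus_def[of x]
    proof (rule INF_greatest)
      fix V assume "V \<in> {W. openin BT W \<and> x \<subseteq> W}"
      then have V: "openin BT V" "x \<subseteq> V" by auto
      have VW: "openin BT (V \<inter> W)" using V W by blast
      define c where "c = nus ((beta_omega - W) \<inter> x)"
      have key: "ennreal (\<mu> A) + c \<le> nuO V" if A: "bs A \<subseteq> V \<inter> W" for A
      proof -
        have o: "openin BT (V \<inter> bs (- A))" using V(1) openin_bs by blast
        have "(beta_omega - W) \<inter> x \<subseteq> V \<inter> bs (- A)" using V(2) A x by (auto simp: bs_Compl)
        then have "c \<le> nuO (V \<inter> bs (- A))" unfolding c_def by (rule nus_le[OF o])
        then have "ennreal (\<mu> A) + c \<le> ennreal (\<mu> A) + nuO (V \<inter> bs (- A))" by (rule add_left_mono)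
        also have "\<dots> \<le> nuO V"
        proof -
          have "ennreal (\<mu> A) + nuO (V \<inter> bs (- A)) = (SUP C\<in>{C. bs C \<subseteq> V \<inter> bs (- A)}. ennreal (\<mu> A) + ennreal (\<mu> C))"
            unfolding nuO_def by (subst ennreal_SUP_add_right) (auto simp: bs_empty intro!: exI[of _ "{}"])
          also have "\<dots> \<le> nuO V"
          proof (rule SUP_least)
            fix C assume "C \<in> {C. bs C \<subseteq> V \<inter> bs (- A)}"
            then have C: "bs C \<subseteq> V" "bs C \<subseteq> bs (- A)" by auto
            have d: "A \<inter> C = {}" using C(2) by (auto simp: bs_subset_iff)
            have "bs (A \<union> C) \<subseteq> V" using A C(1) by (auto simp: bs_Un)
            then have "ennreal (\<mu> (A \<union> C)) \<le> nuO V" unfolding nuO_def by (auto intro!: SUP_upper2[of "A \<union> C"])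
            moreover have "ennreal (\<mu> A) + ennreal (\<mu> C) = ennreal (\<mu> (A \<union> C))"
              using mu_addi[OF d] mu_nn[of A] mu_nn[of C] by (simp add: ennreal_plus)
            ultimately show "ennreal (\<mu> A) + ennreal (\<mu> C) \<le> nuO V" by simp
          qed
          finally show ?thesis .
        qed
        finally show ?thesis .
      qed
      have "nus (W \<inter> x) + c \<le> nuO (V \<inter> W) + c"
        using nus_le[OF VW, of "W \<inter> x"] V(2) by (intro add_right_mono) auto
      also have "nuO (V \<inter> W) + c = (SUP A\<in>{A. bs A \<subseteq> V \<inter> W}. ennreal (\<mu> A) + c)"
        unfolding nuO_def by (subst ennreal_SUP_add_left) (auto simp: bs_empty intro!: exI[of _ "{}"])
      also have "\<dots> \<le> nuO V" by (rule SUP_least) (use key in auto)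
      finally show "nus (W \<inter> x) + nus ((beta_omega - W) \<inter> x) \<le> nuO V" unfolding c_def .
    qed
  qed
qed

lemma oms: "outer_measure_space (Pow beta_omega) nus"
  unfolding outer_measure_space_def positive_def increasing_def countably_subadditive_def
proof (intro conjI ballI impI allI)
  show "nus {} = 0" by (rule nus_empty)
  show "nus x \<le> nus y" if "x \<subseteq> y" for x y using nus_mono that by blast
  fix A :: "nat \<Rightarrow> nat set set set" assume "range A \<subseteq> Pow beta_omega"
  then show "nus (\<Union>i. A i) \<le> (\<Sum>i. nus (A i))" by (intro nus_countable) auto
qed

definition BOR where "BOR = borel_sets_of BT"

lemma BOR_sigma: "sigma_algebra beta_omega BOR"
  unfolding BOR_def borel_sets_of_def topspace_BT
  by (rule sigma_algebra_sigma_sets) (use openin_subset topspace_BT in fastforce)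

lemma ms_BOR: "measure_space beta_omega BOR nus"
proof -
  interpret P: sigma_algebra beta_omega "Pow beta_omega" by (rule sigma_algebra_Pow)
  have ms: "measure_space beta_omega (lambda_system beta_omega (Pow beta_omega) nus) nus"
    by (rule P.caratheodory_lemma[OF oms])
  then interpret L: sigma_algebra beta_omega "lambda_system beta_omega (Pow beta_omega) nus"
    by (simp add: measure_space_def)
  have "BOR \<subseteq> lambda_system beta_omega (Pow beta_omega) nus"
    unfolding BOR_def borel_sets_of_def topspace_BT
    by (rule L.sigma_sets_subset) (auto intro: open_lambda)
  then show ?thesis by (rule measure_down[OF ms BOR_sigma])
qed

definition nu :: "nat set set measure" where "nu = measure_of beta_omega BOR nus"

lemma space_nu: "space nu = beta_omega"
  unfolding nu_def using BOR_sigma by (simp add: sigma_algebra.space_measure_of_eq)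

lemma sets_nu: "sets nu = BOR"
  unfolding nu_def using BOR_sigma by (simp add: sigma_algebra.sets_measure_of_eq)

lemma emeasure_nu: "B \<in> BOR \<Longrightarrow> emeasure nu B = nus B"
  unfolding nu_def using ms_BOR
  by (intro emeasure_measure_of_sigma) (auto simp: measure_space_def)

lemma open_BOR: "openin BT W \<Longrightarrow> W \<in> BOR"
  unfolding BOR_def borel_sets_of_def by (rule sigma_sets.Basic) simp

lemma closed_BOR: "closedin BT K \<Longrightarrow> K \<in> BOR"
proof -
  assume K: "closedin BT K"
  then have "openin BT (beta_omega - K)" by (simp add: closedin_def topspace_BT)
  then have "beta_omega - K \<in> BOR" by (rule open_BOR)
  then have "beta_omega - (beta_omega - K) \<in> BOR"
    using algebra.compl_sets[OF sigma_algebra.axioms(1)[OF BOR_sigma]] by blast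
  moreover have "beta_omega - (beta_omega - K) = K" using K closedin_subset topspace_BT by fastforce
  ultimately show ?thesis by simp
qed

lemma prob_nu: "prob_space nu"
proof (rule prob_spaceI)
  have "emeasure nu beta_omega = nus beta_omega" using emeasure_nu open_BOR[OF open_X] by simp
  also have "\<dots> = nuO (bs UNIV)" using nus_open[OF open_X] by (simp add: bs_UNIV)
  also have "\<dots> = 1" by (simp add: nuO_bs mu_one)
  finally show "emeasure nu (space nu) = 1" by (simp add: space_nu)
qed

end



context mu_setup
begin

interpretation NP: prob_space nu by (rule prob_nu)

lemma BOR_compl: "B \<in> BOR \<Longrightarrow> beta_omega - B \<in> BOR"
  using algebra.compl_sets[OF sigma_algebra.axioms(1)[OF BOR_sigma]] by blast

lemma BOR_sub: "B \<in> BOR \<Longrightarrow> B \<subseteq> beta_omega"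
  using sets.sets_into_space[of B nu] by (simp add: sets_nu space_nu)

lemma nus_meas: "B \<in> BOR \<Longrightarrow> nus B = ennreal (measure nu B)"
  using emeasure_nu[of B] NP.emeasure_eq_measure[of B] by simp

lemma meas_bs: "measure nu (bs A) = \<mu> A"
proof -
  have "ennreal (measure nu (bs A)) = ennreal (\<mu> A)"
    using nus_meas[OF open_BOR[OF openin_bs]] nus_bs by simp
  then show ?thesis by (simp add: mu_nn)
qed

lemma outer_approx:
  assumes B: "B \<in> BOR" and d: "0 < d"
  shows "\<exists>W. openin BT W \<and> B \<subseteq> W \<and> measure nu W < measure nu B + d"
proof -
  obtain W where W: "openin BT W" "B \<subseteq> W" "nuO W < nus B + ennreal d"
    using approx_open[OF BOR_sub[OF B] d] by blast
  have "ennreal (measure nu W) < ennreal (measure nu B) + ennreal d"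
    using W(3) nus_open[OF W(1)] nus_meas[OF open_BOR[OF W(1)]] nus_meas[OF B] by simp
  also have "\<dots> = ennreal (measure nu B + d)" using d by (simp add: ennreal_plus)
  finally have "measure nu W < measure nu B + d" by (simp add: ennreal_less_iff)
  then show ?thesis using W by blast
qed

lemma inner_approx:
  assumes B: "B \<in> BOR" and d: "0 < d"
  shows "\<exists>K. compactin BT K \<and> K \<subseteq> B \<and> measure nu B - d < measure nu K"
proof -
  obtain W where W: "openin BT W" "beta_omega - B \<subseteq> W" "measure nu W < measure nu (beta_omega - B) + d"
    using outer_approx[OF BOR_compl[OF B] d] by blast
  define K where "K = beta_omega - W"
  have Wsub: "W \<subseteq> beta_omega" using W(1) openin_subset topspace_BT by fastforce
  have Kc: "closedin BT K" unfolding K_def using W(1) by (simp add: closedin_def topspace_BT Wsub double_diff)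
  have KB: "K \<subseteq> B" unfolding K_def using W(2) BOR_sub[OF B] by blast
  have "measure nu K = 1 - measure nu W"
    unfolding K_def using NP.prob_compl[of W] open_BOR[OF W(1)] by (simp add: sets_nu space_nu)
  moreover have "measure nu (beta_omega - B) = 1 - measure nu B"
    using NP.prob_compl[of B] B by (simp add: sets_nu space_nu)
  ultimately have "measure nu B - d < measure nu K" using W(3) by linarith
  then show ?thesis using closed_compact[OF Kc] KB by blast
qed

lemma radon: "radon_probability BT nu"
  unfolding radon_probability_def
proof (intro conjI ballI)
  show "prob_space nu" by (rule prob_nu)
  show "space nu = topspace BT" by (simp add: space_nu topspace_BT)
  show "sets nu = borel_sets_of BT" by (simp add: sets_nu BOR_def)
  fix B assume "B \<in> sets nu"
  then have B: "B \<in> BOR" by (simp add: sets_nu)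
  define \<K> where "\<K> = {K. compactin BT K \<and> K \<subseteq> B}"
  have "{} \<in> \<K>" unfolding \<K>_def by simp
  then have ne: "\<K> \<noteq> {}" by blast
  have bdd: "bdd_above ((\<lambda>K. measure nu K) ` \<K>)"
    by (rule bdd_aboveI[of _ 1]) auto
  have le: "measure nu K \<le> measure nu B" if "K \<in> \<K>" for K
  proof -
    have "K \<in> BOR" using that compact_closed closed_BOR unfolding \<K>_def by blast
    then show ?thesis using that B by (intro NP.finite_measure_mono) (auto simp: \<K>_def sets_nu)
  qed
  show "measure nu B = (SUP K\<in>\<K>. measure nu K)"
  proof (rule antisym)
    show "measure nu B \<le> (SUP K\<in>\<K>. measure nu K)"
    proof (rule field_le_epsilon)
      fix d :: real assume d: "0 < d"
      obtain K where K: "compactin BT K" "K \<subseteq> B" "measure nu B - d < measure nu K"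
        using inner_approx[OF B d] by blast
      have "measure nu K \<le> (SUP K\<in>\<K>. measure nu K)"
        by (rule cSUP_upper[OF _ bdd]) (use K in \<open>simp add: \<K>_def\<close>)
      then show "measure nu B \<le> (SUP K\<in>\<K>. measure nu K) + d" using K(3) by linarith
    qed
    show "(SUP K\<in>\<K>. measure nu K) \<le> measure nu B"
      by (rule cSUP_least[OF ne]) (rule le)
  qed
qed

lemma omega_eq: "omega_in_beta = (\<Union>n. bs {n})"
  unfolding omega_in_beta_def by (auto simp: bs_singleton)

lemma omega_null:
  assumes fin: "\<And>F. finite F \<Longrightarrow> \<mu> F = 0"
  shows "measure nu (beta_omega - omega_in_beta) = 1"
proof -
  have oo: "openin BT omega_in_beta" unfolding omega_eq by (intro openin_Union) (auto intro: openin_bs)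
  have "nus (\<Union>n. bs {n}) \<le> (\<Sum>n. nus (bs {n}))" by (rule nus_countable) (rule bs_sub)
  also have "\<dots> = 0" by (simp add: nus_bs fin)
  finally have "nus omega_in_beta = 0" unfolding omega_eq by simp
  then have m0: "measure nu omega_in_beta = 0" using nus_meas[OF open_BOR[OF oo]] by simp
  show ?thesis using NP.prob_compl[of omega_in_beta] open_BOR[OF oo] m0 by (simp add: sets_nu space_nu)
qed

lemma separable_null:
  assumes small: "\<And>p::nat \<Rightarrow> nat set set. (\<forall>n. p n \<in> beta_omega - omega_in_beta) \<Longrightarrow>
          (\<forall>e>0. \<exists>A. (\<forall>n. A \<in> p n) \<and> \<mu> A < e)"
    and F: "closedin BT F" "F \<subseteq> beta_omega - omega_in_beta" "separable_space (subtopology BT F)"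
  shows "measure nu F = 0"
proof -
  have Fsub: "F \<subseteq> beta_omega" using F(1) closedin_subset topspace_BT by metis
  obtain C where C: "countable C" "C \<subseteq> beta_omega \<inter> F" "(subtopology BT F) closure_of C = beta_omega \<inter> F"
    using F(3) unfolding separable_space_def by (auto simp: topspace_BT)
  have BF: "beta_omega \<inter> F = F" using Fsub by blast
  show ?thesis
  proof (cases "C = {}")
    case True
    then have "F = {}" using C(3) BF by simp
    then show ?thesis by simp
  next
    case False
    define p where "p = from_nat_into C"
    have rp: "range p = C" unfolding p_def using False C(1) by simp
    have pC: "p n \<in> C" for n using rp by blast
    have pF: "\<forall>n. p n \<in> beta_omega - omega_in_beta" using pC C(2) F(2) by blast
    have "measure nu F \<le> 0"
    proof (rule field_le_epsilon)
      fix e :: real assume e: "0 < e"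
      obtain A where A: "\<forall>n. A \<in> p n" "\<mu> A < e" using small[OF pF] e by blast
      have "C \<subseteq> bs A"
      proof
        fix c assume "c \<in> C"
        then obtain n where "c = p n" using rp by blast
        then show "c \<in> bs A" using A(1) pF unfolding bs_def by auto
      qed
      then have "BT closure_of C \<subseteq> bs A" by (rule closure_of_minimal[OF _ closedin_bs])
      moreover have "(subtopology BT F) closure_of C \<subseteq> BT closure_of C" by (rule closure_of_subtopology_subset)
      ultimately have "F \<subseteq> bs A" using C(3) BF by simp
      then have "measure nu F \<le> measure nu (bs A)"
        using closed_BOR[OF F(1)] open_BOR[OF openin_bs]
        by (intro NP.finite_measure_mono) (auto simp: sets_nu)
      then show "measure nu F \<le> 0 + e" using A(2) meas_bs by simp
    qed
    then show ?thesis using measure_nonneg[of nu F] by linarith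
  qed
qed

end



context mu_setup
begin

interpretation NP: prob_space nu by (rule prob_nu)

lemma sets_BOR_nu: "B \<in> BOR \<Longrightarrow> B \<in> sets nu" by (simp add: sets_nu)

lemma bs_nu: "bs A \<in> sets nu" by (simp add: sets_nu open_BOR[OF openin_bs])

lemma regular_bs:
  assumes A: "A \<in> BOR" and d: "0 < d"
  shows "\<exists>A'. measure nu (sd A (bs A')) < d"
proof -
  obtain K where K: "compactin BT K" "K \<subseteq> A" "measure nu A - d/2 < measure nu K"
    using inner_approx[OF A, of "d/2"] d by auto
  obtain W where W: "openin BT W" "A \<subseteq> W" "measure nu W < measure nu A + d/2"
    using outer_approx[OF A, of "d/2"] d by auto
  obtain A' where A': "K \<subseteq> bs A'" "bs A' \<subseteq> W" using compact_in_open_bs[OF K(1) W(1)] K(2) W(2) by blast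
  have KB: "K \<in> sets nu" using compact_closed[OF K(1)] closed_BOR sets_BOR_nu by blast
  have WB: "W \<in> sets nu" using open_BOR[OF W(1)] sets_BOR_nu by blast
  have AB: "A \<in> sets nu" using A sets_BOR_nu by blast
  have sub: "sd A (bs A') \<subseteq> W - K" unfolding sd_def using A' K(2) W(2) by blast
  have "measure nu (sd A (bs A')) \<le> measure nu (W - K)"
    using sub KB WB AB bs_nu by (intro NP.finite_measure_mono) (auto simp: sd_def)
  also have "\<dots> = measure nu W - measure nu K"
    using K(2) W(2) by (intro NP.finite_measure_Diff[OF WB KB]) blast
  finally have "measure nu (sd A (bs A')) < d" using K(3) W(3) by linarith
  then show ?thesis by blast
qed

lemma sd_bs: "measure nu (sd (bs A) (bs C)) = \<mu> (A - C) + \<mu> (C - A)"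
proof -
  have e1: "bs (A - C) = bs A - bs C"
    using bs_Int[of A "- C"] bs_Compl[of C] bs_sub[of A] by (auto simp: Diff_eq)
  have e2: "bs (C - A) = bs C - bs A"
    using bs_Int[of C "- A"] bs_Compl[of A] bs_sub[of C] by (auto simp: Diff_eq)
  have "sd (bs A) (bs C) = bs (A - C) \<union> bs (C - A)" unfolding sd_def e1 e2 ..
  moreover have "measure nu (bs (A - C) \<union> bs (C - A)) = measure nu (bs (A - C)) + measure nu (bs (C - A))"
    by (rule NP.finite_measure_Union[OF bs_nu bs_nu]) (auto simp: e1 e2)
  ultimately show ?thesis by (simp add: meas_bs)
qed

lemma approx_clopen:
  assumes ap: "\<And>A e. 0 < e \<Longrightarrow> \<exists>C\<in>\<C>. \<mu> (A - C) + \<mu> (C - A) < e"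
    and A: "A \<in> BOR" and d: "0 < d"
  shows "\<exists>C\<in>\<C>. measure nu (sd A (bs C)) < d"
proof -
  obtain A' where A': "measure nu (sd A (bs A')) < d/2" using regular_bs[OF A, of "d/2"] d by auto
  obtain C where C: "C \<in> \<C>" "\<mu> (A' - C) + \<mu> (C - A') < d/2" using ap[of "d/2" A'] d by auto
  have AB: "A \<in> sets nu" using A sets_BOR_nu by blast
  have sub: "sd A (bs C) \<subseteq> sd A (bs A') \<union> sd (bs A') (bs C)" unfolding sd_def by blast
  have "measure nu (sd A (bs C)) \<le> measure nu (sd A (bs A') \<union> sd (bs A') (bs C))"
    using sub AB bs_nu by (intro NP.finite_measure_mono) (auto simp: sd_def)
  also have "\<dots> \<le> measure nu (sd A (bs A')) + measure nu (sd (bs A') (bs C))"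
    using AB bs_nu by (intro measure_subadditive) (auto simp: sd_def NP.emeasure_finite less_top[symmetric])
  finally have "measure nu (sd A (bs C)) < d" using A' C sd_bs[of A' C] by linarith
  then show ?thesis using C(1) by blast
qed

definition fnl :: "(nat \<Rightarrow> nat set) \<Rightarrow> (rat \<times> nat) list \<Rightarrow> nat set set \<Rightarrow> real" where
  "fnl g l x = sum_list (map (\<lambda>(q, i). real_of_rat q * indicator (bs (g i)) x) l)"

lemma fnl_Nil: "fnl g [] = (\<lambda>x. 0)" by (simp add: fnl_def fun_eq_iff)

lemma fnl_Cons: "fnl g ((q, i) # l) x = real_of_rat q * indicator (bs (g i)) x + fnl g l x"
  by (simp add: fnl_def)

lemma fnl_append: "fnl g (l1 @ l2) x = fnl g l1 x + fnl g l2 x"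
  by (simp add: fnl_def)

lemma integrable_ind: "integrable nu (indicator (bs C) :: _ \<Rightarrow> real)"
proof -
  have "bs C \<inter> space nu = bs C" using bs_sub by (auto simp: space_nu)
  then show ?thesis using bs_nu by (simp add: integrable_indicator_iff NP.emeasure_finite less_top[symmetric])
qed

lemma integrable_fnl: "integrable nu (fnl g l)"
proof (induction l)
  case Nil
  then show ?case by (simp add: fnl_Nil)
next
  case (Cons a l)
  obtain q i where a: "a = (q, i)" by (cases a)
  have t1: "integrable nu (\<lambda>x. real_of_rat q * indicator (bs (g i)) x)"
    by (rule integrable_mult_right) (rule integrable_ind)
  have "integrable nu (\<lambda>x. real_of_rat q * indicator (bs (g i)) x + fnl g l x)"
    by (rule Bochner_Integration.integrable_add[OF t1 Cons.IH])
  then show ?case unfolding a fnl_Cons[abs_def] by simp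
qed

lemma ctype:
  assumes cnt: "countable \<C>" and ap: "\<And>A e. 0 < e \<Longrightarrow> \<exists>C\<in>\<C>. \<mu> (A - C) + \<mu> (C - A) < e"
  shows "countable_type nu"
proof -
  have Cne: "\<C> \<noteq> {}" using ap[of 1 "{}"] by auto
  define g where "g = from_nat_into \<C>"
  have rg: "range g = \<C>" unfolding g_def using Cne cnt by simp
  define D where "D = range (fnl g)"
  have cD: "countable D" unfolding D_def by simp
  have iD: "\<forall>h\<in>D. integrable nu h" unfolding D_def using integrable_fnl by blast
  define P where "P f \<longleftrightarrow> (\<forall>e>0. \<exists>h\<in>D. (\<integral>x. \<bar>f x - h x\<bar> \<partial>nu) < e)" for f :: "nat set set \<Rightarrow> real"
  have main: "P f" if f: "integrable nu f" for f
    using f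
  proof (induction rule: integrable_induct)
    case (base A c)
    show ?case unfolding P_def
    proof (intro allI impI)
      fix e :: real assume e: "0 < e"
      obtain r where r: "r \<in> \<rat>" "c < r" "r < c + e/2" using Rats_dense_in_real[of c "c + e/2"] e by auto
      then obtain q where q: "r = real_of_rat q" by (cases rule: Rats_cases) auto
      define d where "d = e / (2 * (\<bar>c\<bar> + 1))"
      have d: "0 < d" unfolding d_def using e by (simp add: add_pos_nonneg)
      have AB: "A \<in> BOR" using base(1) by (simp add: sets_nu)
      obtain C where C: "C \<in> \<C>" "measure nu (sd A (bs C)) < d" using approx_clopen[OF ap AB d] by blast
      obtain i where i: "g i = C" using C(1) rg by blast
      define h where "h = fnl g [(q, i)]"
      have hD: "h \<in> D" unfolding h_def D_def by simp
      have hx: "h x = real_of_rat q * indicator (bs C) x" for x unfolding h_def by (simp add: fnl_Cons fnl_Nil i)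
      have sdB: "sd A (bs C) \<in> sets nu" using base(1) bs_nu unfolding sd_def by auto
      have isd: "integrable nu (indicator (sd A (bs C)) :: _ \<Rightarrow> real)"
      proof -
        have "sd A (bs C) \<inter> space nu = sd A (bs C)" using sets.sets_into_space[OF sdB] by blast
        then show ?thesis using sdB by (simp add: integrable_indicator_iff NP.emeasure_finite less_top[symmetric])
      qed
      have pw: "\<bar>indicator A x *\<^sub>R c - h x\<bar> \<le> \<bar>c\<bar> * indicator (sd A (bs C)) x + \<bar>c - r\<bar> * indicator (bs C) x" for x
        unfolding hx q[symmetric] sd_def
        by (cases "x \<in> A"; cases "x \<in> bs C") (auto simp: indicator_def abs_if)
      have iL: "integrable nu (\<lambda>x. \<bar>indicator A x *\<^sub>R c - h x\<bar>)"
      proof -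
        have "integrable nu (\<lambda>x. indicator A x *\<^sub>R c - h x)"
        proof (rule Bochner_Integration.integrable_diff)
          have "A \<inter> space nu = A" using sets.sets_into_space[OF base(1)] by blast
          then have "integrable nu (indicator A :: _ \<Rightarrow> real)"
            using base by (simp add: integrable_indicator_iff)
          then show "integrable nu (\<lambda>x. indicator A x *\<^sub>R c)" by simp
          show "integrable nu h" using iD hD by blast
        qed
        then show ?thesis by (rule Bochner_Integration.integrable_abs)
      qed
      have iR: "integrable nu (\<lambda>x. \<bar>c\<bar> * indicator (sd A (bs C)) x + \<bar>c - r\<bar> * indicator (bs C) x)"
        by (intro Bochner_Integration.integrable_add integrable_mult_right) (use isd integrable_ind in auto)
      have "(\<integral>x. \<bar>indicator A x *\<^sub>R c - h x\<bar> \<partial>nu) \<le> (\<integral>x. \<bar>c\<bar> * indicator (sd A (bs C)) x + \<bar>c - r\<bar> * indicator (bs C) x \<partial>nu)"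
        by (rule Bochner_Integration.integral_mono[OF iL iR pw])
      also have "\<dots> = \<bar>c\<bar> * measure nu (sd A (bs C)) + \<bar>c - r\<bar> * measure nu (bs C)"
      proof -
        have s1: "sd A (bs C) \<inter> space nu = sd A (bs C)" using sets.sets_into_space[OF sdB] by blast
        have s2: "bs C \<inter> space nu = bs C" using bs_sub by (auto simp: space_nu)
        show ?thesis using isd integrable_ind by (simp add: s1 s2)
      qed
      also have "\<dots> < e"
      proof -
        have m1: "\<bar>c\<bar> * measure nu (sd A (bs C)) \<le> \<bar>c\<bar> * d" using C(2) by (intro mult_left_mono) auto
        have m2: "\<bar>c\<bar> * d \<le> e / 2"
        proof -
          have "\<bar>c\<bar> * d = e / 2 * (\<bar>c\<bar> / (\<bar>c\<bar> + 1))" unfolding d_def by (simp add: field_simps)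
          also have "\<dots> \<le> e / 2 * 1" using e by (intro mult_left_mono) auto
          finally show ?thesis by simp
        qed
        have m3: "\<bar>c - r\<bar> * measure nu (bs C) \<le> \<bar>c - r\<bar>"
          using NP.prob_le_1[of "bs C"] by (simp add: mult_left_le)
        have m4: "\<bar>c - r\<bar> < e / 2" using r by auto
        show ?thesis using m1 m2 m3 m4 by linarith
      qed
      finally show "\<exists>h\<in>D. (\<integral>x. \<bar>indicator A x *\<^sub>R c - h x\<bar> \<partial>nu) < e" using hD by blast
    qed
  next
    case (add f1 f2)
    show ?case unfolding P_def
    proof (intro allI impI)
      fix e :: real assume e: "0 < e"
      obtain h1 where h1: "h1 \<in> D" "(\<integral>x. \<bar>f1 x - h1 x\<bar> \<partial>nu) < e/2" using add.IH(1) e unfolding P_def by (meson half_gt_zero)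
      obtain h2 where h2: "h2 \<in> D" "(\<integral>x. \<bar>f2 x - h2 x\<bar> \<partial>nu) < e/2" using add.IH(2) e unfolding P_def by (meson half_gt_zero)
      obtain l1 l2 where l: "h1 = fnl g l1" "h2 = fnl g l2" using h1(1) h2(1) unfolding D_def by blast
      define h where "h = fnl g (l1 @ l2)"
      have hD: "h \<in> D" unfolding h_def D_def by simp
      have hx: "h x = h1 x + h2 x" for x unfolding h_def l by (rule fnl_append)
      have i1: "integrable nu (\<lambda>x. \<bar>f1 x - h1 x\<bar>)" using add.hyps(1) iD h1(1) by auto
      have i2: "integrable nu (\<lambda>x. \<bar>f2 x - h2 x\<bar>)" using add.hyps(2) iD h2(1) by auto
      have iL: "integrable nu (\<lambda>x. \<bar>(f1 x + f2 x) - h x\<bar>)"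
        by (intro Bochner_Integration.integrable_abs Bochner_Integration.integrable_diff Bochner_Integration.integrable_add) (use add.hyps(1) add.hyps(2) iD hD in auto)
      have "(\<integral>x. \<bar>(f1 x + f2 x) - h x\<bar> \<partial>nu) \<le> (\<integral>x. \<bar>f1 x - h1 x\<bar> + \<bar>f2 x - h2 x\<bar> \<partial>nu)"
        by (rule Bochner_Integration.integral_mono[OF iL]) (use i1 i2 hx in auto)
      also have "\<dots> = (\<integral>x. \<bar>f1 x - h1 x\<bar> \<partial>nu) + (\<integral>x. \<bar>f2 x - h2 x\<bar> \<partial>nu)"
        by (rule Bochner_Integration.integral_add[OF i1 i2])
      finally show "\<exists>h\<in>D. (\<integral>x. \<bar>(f1 x + f2 x) - h x\<bar> \<partial>nu) < e" using h1 h2 hD by (intro bexI[of _ h]) auto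
    qed
  next
    case (lim f s)
    show ?case unfolding P_def
    proof (intro allI impI)
      fix e :: real assume e: "0 < e"
      have fm: "f \<in> borel_measurable nu" using lim.hyps(4) by auto
      have sm: "\<And>i. s i \<in> borel_measurable nu" using lim.hyps(1) by auto
      have "(\<lambda>i. \<integral>x. \<bar>s i x - f x\<bar> \<partial>nu) \<longlonglongrightarrow> (\<integral>x. 0 \<partial>nu)"
      proof (rule integral_dominated_convergence[where w = "\<lambda>x. 3 * \<bar>f x\<bar>"])
        show "(\<lambda>x. 0::real) \<in> borel_measurable nu" by simp
        show "(\<lambda>x. \<bar>s i x - f x\<bar>) \<in> borel_measurable nu" for i using sm fm by measurable
        show "integrable nu (\<lambda>x. 3 * \<bar>f x\<bar>)" using lim.hyps(4) by auto
        show "AE x in nu. (\<lambda>i. \<bar>s i x - f x\<bar>) \<longlonglongrightarrow> 0"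
        proof (rule AE_I2)
          fix x assume x: "x \<in> space nu"
          have "(\<lambda>i. s i x - f x) \<longlonglongrightarrow> f x - f x" by (intro tendsto_diff lim.hyps(2)[OF x] tendsto_const)
          then have "(\<lambda>i. \<bar>s i x - f x\<bar>) \<longlonglongrightarrow> \<bar>f x - f x\<bar>" by (rule tendsto_rabs)
          then show "(\<lambda>i. \<bar>s i x - f x\<bar>) \<longlonglongrightarrow> 0" by simp
        qed
        show "AE x in nu. norm \<bar>s i x - f x\<bar> \<le> 3 * \<bar>f x\<bar>" for i
        proof (rule AE_I2)
          fix x assume x: "x \<in> space nu"
          have "norm (s i x) \<le> 2 * norm (f x)" by (rule lim.hyps(3)[OF x])
          then show "norm \<bar>s i x - f x\<bar> \<le> 3 * \<bar>f x\<bar>" by simp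
        qed
      qed
      then have lim0: "(\<lambda>i. \<integral>x. \<bar>s i x - f x\<bar> \<partial>nu) \<longlonglongrightarrow> 0" by simp
      obtain N where N: "norm ((\<integral>x. \<bar>s N x - f x\<bar> \<partial>nu) - 0) < e/2"
        using LIMSEQ_D[OF lim0, of "e/2"] e by auto
      obtain h where h: "h \<in> D" "(\<integral>x. \<bar>s N x - h x\<bar> \<partial>nu) < e/2" using lim.IH[of N] e unfolding P_def by (meson half_gt_zero)
      have i1: "integrable nu (\<lambda>x. \<bar>s N x - f x\<bar>)" using lim.hyps(1) lim.hyps(4) by auto
      have i2: "integrable nu (\<lambda>x. \<bar>s N x - h x\<bar>)" using lim.hyps(1) iD h(1) by auto
      have iL: "integrable nu (\<lambda>x. \<bar>f x - h x\<bar>)" using lim.hyps(4) iD h(1) by auto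
      have "(\<integral>x. \<bar>f x - h x\<bar> \<partial>nu) \<le> (\<integral>x. \<bar>s N x - f x\<bar> + \<bar>s N x - h x\<bar> \<partial>nu)"
        by (rule Bochner_Integration.integral_mono[OF iL]) (use i1 i2 in auto)
      also have "\<dots> = (\<integral>x. \<bar>s N x - f x\<bar> \<partial>nu) + (\<integral>x. \<bar>s N x - h x\<bar> \<partial>nu)"
        by (rule Bochner_Integration.integral_add[OF i1 i2])
      finally show "\<exists>h\<in>D. (\<integral>x. \<bar>f x - h x\<bar> \<partial>nu) < e" using N h by (intro bexI[of _ h]) auto
    qed
  qed
  show ?thesis unfolding countable_type_def
    using cD iD main unfolding P_def by blast
qed

end

theorem theorem3p2:
  shows "\<exists>\<nu> :: nat set set measure.
           radon_probability beta_omega_top \<nu> \<and>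
           countable_type \<nu> \<and>
           measure \<nu> (beta_omega - omega_in_beta) = 1 \<and>
           (\<forall>F. closedin beta_omega_top F \<and> F \<subseteq> beta_omega - omega_in_beta \<and>
                separable_space (subtopology beta_omega_top F) \<longrightarrow> measure \<nu> F = 0)"
proof -
  obtain \<mu> :: "nat set \<Rightarrow> real" where
    m1: "\<And>A. 0 \<le> \<mu> A" and m2: "\<mu> UNIV = 1" and m3: "\<And>A B. A \<inter> B = {} \<Longrightarrow> \<mu> (A \<union> B) = \<mu> A + \<mu> B"
    and m4: "\<And>F. finite F \<Longrightarrow> \<mu> F = 0"
    and m5: "\<And>p::nat \<Rightarrow> nat set set. (\<forall>n. p n \<in> beta_omega - omega_in_beta) \<Longrightarrow>
          (\<forall>e>0. \<exists>A. (\<forall>n. A \<in> p n) \<and> \<mu> A < e)"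
    and m6: "\<exists>\<C>. countable \<C> \<and> (\<forall>A e. 0 < e \<longrightarrow> (\<exists>C\<in>\<C>. \<mu> (A - C) + \<mu> (C - A) < e))"
    using mu_exists by metis
  interpret MS: mu_setup \<mu> by (unfold_locales) (auto intro: m1 m2 m3)
  obtain \<C> where C: "countable \<C>" "\<And>A e. 0 < e \<Longrightarrow> \<exists>C\<in>\<C>. \<mu> (A - C) + \<mu> (C - A) < e"
    using m6 by blast
  have "radon_probability beta_omega_top MS.nu" by (rule MS.radon)
  moreover have "countable_type MS.nu" by (rule MS.ctype[OF C])
  moreover have "measure MS.nu (beta_omega - omega_in_beta) = 1" by (rule MS.omega_null[OF m4])
  moreover have "\<forall>F. closedin beta_omega_top F \<and> F \<subseteq> beta_omega - omega_in_beta \<and>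
                separable_space (subtopology beta_omega_top F) \<longrightarrow> measure MS.nu F = 0"
    using MS.separable_null[OF m5] by blast
  ultimately show ?thesis by blast
qed


end
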